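(* Let $T>0$, $\alpha\in(0,1)$, and let $H$ be a Hilbert space with inner product $(\cdot,\cdot)_H$. Suppose one of the following holds: (i) $f_1\in C([0,T];H)$, the Riemann–Liouville fractional derivative of $f_1$ of order $\alpha$ exists at $t\in(0,T]$, and $f_2\in H^\beta([0,T];H)$ with $0<\alpha<\beta<1$; (ii) $f_1\in H^\beta([0,T];H)$ and $f_2\in H^\delta([0,T];H)$ for some $0<\beta<1$, $0<\delta<1$ with $0<\alpha<\beta+\delta$, and the Riemann–Liouville fractional derivatives of order $\alpha$ of both $f_1$ and $f_2$ exist at $t\in(0,T]$. Then at each such $t\in(0,T]$, $$D_t^\alpha\big(f_1(t),f_2(t)\big)_H=\big(D_t^\alpha f_1(t),f_2(t)\big)_H+\big(f_1(t),D_t^\alpha f_2(t)\big)_H-\frac{\alpha}{\Gamma(1-\alpha)}\int_0^t\frac{\big(f_1(s)-f_1(t),f_2(s)-f_2(t)\big)_H}{(t-s)^{\alpha+1}}\,ds-\frac{\big(f_1(t),f_2(t)\big)_H}{\Gamma(1-\alpha)t^\alpha}.$$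
   Context: $J_t^{1-\alpha}g(t)=\frac{1}{\Gamma(1-\alpha)}\int_0^t(t-s)^{-\alpha}g(s)\,ds$; the Riemann–Liouville derivative of order $\alpha$ at $t$ is $D_t^\alpha g(t)=\frac{d}{dt}J_t^{1-\alpha}g(t)$, and it "exists at $t$" when this derivative exists at $t$. For $0<\gamma<1$, $H^\gamma([0,T];H)$ is the set of $g\in C([0,T];H)$ for which there is $M>0$ with $\|g(t)-g(s)\|_H\le M|t-s|^\gamma$ for all $t,s\in[0,T]$. *)

theory Defs
  imports "HOL-Analysis.Analysis"
begin

text \<open>Riemann--Liouville integral of order 1-alpha of an H-valued function g on [0,t]
  (Henstock--Kurzweil integral).\<close>
definition RL_J1 :: "real \<Rightarrow> (real \<Rightarrow> 'a::real_normed_vector) \<Rightarrow> real \<Rightarrow> 'a" where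
  "RL_J1 \<alpha> g t = (1 / Gamma (1 - \<alpha>)) *\<^sub>R integral {0..t} (\<lambda>s. ((t - s) powr (- \<alpha>)) *\<^sub>R g s)"

definition RL_D_exists :: "real \<Rightarrow> real \<Rightarrow> (real \<Rightarrow> 'a::real_normed_vector) \<Rightarrow> real \<Rightarrow> bool" where
  "RL_D_exists T \<alpha> g t \<longleftrightarrow> (\<lambda>\<tau>. RL_J1 \<alpha> g \<tau>) differentiable (at t within {0..T})"

definition RL_D :: "real \<Rightarrow> real \<Rightarrow> (real \<Rightarrow> 'a::real_normed_vector) \<Rightarrow> real \<Rightarrow> 'a" where
  "RL_D T \<alpha> g t = vector_derivative (\<lambda>\<tau>. RL_J1 \<alpha> g \<tau>) (at t within {0..T})"

definition holder_space :: "real \<Rightarrow> real \<Rightarrow> (real \<Rightarrow> 'a::real_normed_vector) \<Rightarrow> bool" where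
  "holder_space \<gamma> T g \<longleftrightarrow> continuous_on {0..T} g \<and>
     (\<exists>M>0. \<forall>t\<in>{0..T}. \<forall>s\<in>{0..T}. norm (g t - g s) \<le> M * \<bar>t - s\<bar> powr \<gamma>)"

end

theory Submission
  imports Defs
begin

lemma powr_kernel_has_integral:
  fixes a c p :: real
  assumes "a \<le> c" "p > -1"
  shows "((\<lambda>s. (c - s) powr p) has_integral (c - a) powr (p + 1) / (p + 1)) {a..c}"
proof -
  define F where "F = (\<lambda>s. - ((c - s) powr (p + 1) / (p + 1)))"
  have "((\<lambda>s. (c - s) powr p) has_integral (F c - F a)) {a..c}"
  proof (rule fundamental_theorem_of_calculus_interior_strong[of "{}"])
    show "continuous_on {a..c} F" unfolding F_def
      using assms by (auto intro!: continuous_intros continuous_on_powr')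
    fix x assume x: "x \<in> {a<..<c} - {}"
    have "((\<lambda>s. (c - s) powr (p + 1)) has_real_derivative (p + 1) * (c - x) powr (p + 1 - 1) * (-1)) (at x)"
      using x by (auto intro!: derivative_eq_intros)
    then have "(F has_real_derivative (c - x) powr p) (at x)"
      unfolding F_def using assms x by (auto intro!: derivative_eq_intros)
    then show "(F has_vector_derivative (c - x) powr p) (at x)"
      by (simp add: has_real_derivative_iff_has_vector_derivative)
  qed (use assms in auto)
  then show ?thesis unfolding F_def by simp
qed

lemma sing_integrable:
  fixes R :: "real \<Rightarrow> 'b::banach"
  assumes ac: "a \<le> c" and contR: "continuous_on {a..c} R"
    and bnd: "\<And>s. s \<in> {a..<c} \<Longrightarrow> norm (R s) \<le> C * (c - s) powr \<gamma>"
    and pg: "p + \<gamma> > -1" and g0: "\<gamma> \<ge> 0" and C0: "C \<ge> 0"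
  shows "(\<lambda>s. (c - s) powr p *\<^sub>R R s) integrable_on {a..c}"
proof -
  define \<theta> where "\<theta> = (p + \<gamma> + 1) / 2"
  have th: "\<theta> > 0" using pg by (simp add: \<theta>_def)
  define U where "U = (c - a) powr \<theta>"
  have U0: "U \<ge> 0" by (simp add: U_def)
  define \<phi> where "\<phi> = (\<lambda>u. (- (1 / \<theta>) * u powr ((p + 1) / \<theta> - 1)) *\<^sub>R R (c - u powr (1 / \<theta>)))"
  have inv: "u powr (1 / \<theta>) \<in> {0..c - a}" if "u \<in> {0..U}" for u
  proof -
    have "u powr (1 / \<theta>) \<le> U powr (1 / \<theta>)"
      using that th by (intro powr_mono2) auto
    also have "\<dots> = c - a" using th ac by (simp add: U_def powr_powr)
    finally show ?thesis by simp
  qed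
  have phi_bnd: "norm (\<phi> u) \<le> (C / \<theta>) * u" if u: "u \<in> {0..U}" for u
  proof (cases "u = 0")
    case True then show ?thesis by (simp add: \<phi>_def)
  next
    case False
    hence up: "u > 0" using u by auto
    define s where "s = c - u powr (1 / \<theta>)"
    have s: "s \<in> {a..<c}" using inv[OF u] up th by (auto simp: s_def)
    have cs: "c - s = u powr (1 / \<theta>)" by (simp add: s_def)
    have "norm (\<phi> u) = (1 / \<theta>) * u powr ((p + 1) / \<theta> - 1) * norm (R s)"
      using th by (simp add: \<phi>_def s_def abs_mult)
    also have "\<dots> \<le> (1 / \<theta>) * u powr ((p + 1) / \<theta> - 1) * (C * (c - s) powr \<gamma>)"
      using bnd[OF s] th by (intro mult_left_mono) auto
    also have "\<dots> = (C / \<theta>) * (u powr ((p + 1) / \<theta> - 1) * u powr (\<gamma> / \<theta>))"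
      using up by (simp add: cs powr_powr)
    also have "u powr ((p + 1) / \<theta> - 1) * u powr (\<gamma> / \<theta>) = u powr ((p + 1) / \<theta> - 1 + \<gamma> / \<theta>)"
      by (simp add: powr_add)
    also have "(p + 1) / \<theta> - 1 + \<gamma> / \<theta> = 1"
    proof -
      have "(p + 1) / \<theta> - 1 + \<gamma> / \<theta> = (p + 1 + \<gamma>) / \<theta> - 1" by (simp add: add_divide_distrib)
      also have "(p + 1 + \<gamma>) / \<theta> = 2" using th pg by (simp add: \<theta>_def divide_simps)
      finally show ?thesis by simp
    qed
    finally show ?thesis using up by simp
  qed
  have cont_phi: "continuous_on {0..U} \<phi>"
  proof -
    have c1: "continuous_on {0<..U} \<phi>"
      unfolding \<phi>_def
    proof (intro continuous_intros continuous_on_compose2[OF contR])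
      show "(\<lambda>x. c - x powr (1 / \<theta>)) ` {0<..U} \<subseteq> {a..c}"
      proof
        fix y assume "y \<in> (\<lambda>x. c - x powr (1 / \<theta>)) ` {0<..U}"
        then obtain x where "x \<in> {0<..U}" "y = c - x powr (1 / \<theta>)" by auto
        with inv[of x] show "y \<in> {a..c}" by auto
      qed
    qed auto
    show ?thesis
      unfolding continuous_on_eq_continuous_within
    proof
      fix u assume u: "u \<in> {0..U}"
      show "continuous (at u within {0..U}) \<phi>"
      proof (cases "u = 0")
        case True
        have "(\<phi> \<longlongrightarrow> 0) (at 0 within {0..U})"
        proof (rule tendsto_norm_zero_cancel, rule tendsto_sandwich[of "\<lambda>_. 0" _ _ "\<lambda>x. (C / \<theta>) * x"])
          show "\<forall>\<^sub>F x in at 0 within {0..U}. 0 \<le> norm (\<phi> x)" by simp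
          show "\<forall>\<^sub>F x in at 0 within {0..U}. norm (\<phi> x) \<le> C / \<theta> * x"
            using phi_bnd by (auto simp: eventually_at_filter)
          show "((\<lambda>x. C / \<theta> * x) \<longlongrightarrow> 0) (at 0 within {0..U})"
            using th by (auto intro!: tendsto_eq_intros)
        qed simp
        moreover have "\<phi> 0 = 0" by (simp add: \<phi>_def)
        ultimately show ?thesis using True by (simp add: continuous_within)
      next
        case False
        hence up: "u > 0" using u by auto
        have "at u within {0..U} = at u within {0<..U}"
          by (rule at_within_nhd[of _ "{0<..}"]) (use up in auto)
        moreover have "continuous (at u within {0<..U}) \<phi>"
          using c1 up u unfolding continuous_on_eq_continuous_within by auto
        ultimately show ?thesis by (simp add: continuous_within)
      qed
    qed
  qed
  define \<Phi> where "\<Phi> = (\<lambda>x. integral {0..(c - x) powr \<theta>} \<phi>)"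
  have "((\<lambda>s. (c - s) powr p *\<^sub>R R s) has_integral (\<Phi> c - \<Phi> a)) {a..c}"
  proof (rule fundamental_theorem_of_calculus_interior_strong[of "{}"])
    have g_cont: "continuous_on {a..c} (\<lambda>x. (c - x) powr \<theta>)"
      using th by (auto intro!: continuous_intros continuous_on_powr')
    have g_img: "(\<lambda>x. (c - x) powr \<theta>) ` {a..c} \<subseteq> {0..U}"
      using th by (auto simp: U_def intro!: powr_mono2)
    show "continuous_on {a..c} \<Phi>" unfolding \<Phi>_def
      by (rule continuous_on_compose2[OF indefinite_integral_continuous_1[OF integrable_continuous_real[OF cont_phi]] g_cont g_img])
    fix x assume x: "x \<in> {a<..<c} - {}"
    hence cx: "c - x > 0" by auto
    have gd: "((\<lambda>x. (c - x) powr \<theta>) has_vector_derivative (\<theta> * (c - x) powr (\<theta> - 1) * (-1))) (at x)"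
      unfolding has_real_derivative_iff_has_vector_derivative[symmetric]
      using cx by (auto intro!: derivative_eq_intros)
    have gx: "(c - x) powr \<theta> \<in> {0..U}" using g_img x by (auto simp: image_subset_iff)
    have "(((\<lambda>y. integral {0..y} \<phi>) \<circ> (\<lambda>x. (c - x) powr \<theta>)) has_vector_derivative
        (\<theta> * (c - x) powr (\<theta> - 1) * (-1)) *\<^sub>R \<phi> ((c - x) powr \<theta>)) (at x within {a..c})"
    proof (rule vector_diff_chain_within)
      show "((\<lambda>x. (c - x) powr \<theta>) has_vector_derivative (\<theta> * (c - x) powr (\<theta> - 1) * (-1))) (at x within {a..c})"
        using gd has_vector_derivative_at_within by blast
      show "((\<lambda>y. integral {0..y} \<phi>) has_vector_derivative \<phi> ((c - x) powr \<theta>))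
          (at ((c - x) powr \<theta>) within (\<lambda>x. (c - x) powr \<theta>) ` {a..c})"
        using gx g_img by (blast intro: has_vector_derivative_within_subset integral_has_vector_derivative cont_phi)
    qed
    moreover have "(\<theta> * (c - x) powr (\<theta> - 1) * (-1)) *\<^sub>R \<phi> ((c - x) powr \<theta>) = (c - x) powr p *\<^sub>R R x"
    proof -
      have e1: "((c - x) powr \<theta>) powr (1 / \<theta>) = c - x" using th cx by (simp add: powr_powr)
      have e2: "((c - x) powr \<theta>) powr ((p + 1) / \<theta> - 1) = (c - x) powr (p + 1 - \<theta>)"
      proof -
        have "\<theta> * ((p + 1) / \<theta> - 1) = p + 1 - \<theta>" using th by (simp add: field_simps)
        then show ?thesis using th cx by (simp add: powr_powr)
      qed
      have e3: "(c - x) powr (\<theta> - 1) * (c - x) powr (p + 1 - \<theta>) = (c - x) powr p"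
        by (simp add: powr_add[symmetric])
      show ?thesis unfolding \<phi>_def e1 e2 using th e3
        by (simp add: field_simps)
    qed
    ultimately have "(\<Phi> has_vector_derivative (c - x) powr p *\<^sub>R R x) (at x within {a..c})"
      by (simp add: \<Phi>_def o_def)
    then show "(\<Phi> has_vector_derivative (c - x) powr p *\<^sub>R R x) (at x)"
      using x by (simp add: at_within_Icc_at)
  qed (use ac in auto)
  then show ?thesis by blast
qed

lemma powr_ge_one_plus_ln:
  fixes z a :: real assumes "z > 0" shows "z powr a \<ge> 1 + a * ln z"
  using exp_ge_add_one_self[of "a * ln z"] assms by (simp add: powr_def)

lemma kplus_core:
  fixes x \<alpha> l :: real
  assumes x: "x > 0" and a: "0 < \<alpha>" "\<alpha> < 1" and l: "0 \<le> l" "l \<le> 1"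
  shows "0 \<le> (1 + x) powr (- \<alpha>) - 1 + \<alpha> * x"
    and "(1 + x) powr (- \<alpha>) - 1 + \<alpha> * x \<le> 2 * x powr (1 + l)"
proof -
  have lnx: "ln (1 + x) \<le> x" using ln_le_minus_one[of "1 + x"] x by simp
  have "(1 + x) powr (- \<alpha>) \<ge> 1 + (- \<alpha>) * ln (1 + x)"
    using powr_ge_one_plus_ln[of "1 + x" "- \<alpha>"] x by simp
  moreover have "(- \<alpha>) * ln (1 + x) \<ge> - \<alpha> * x" using lnx a by (simp add: mult_left_mono)
  ultimately show "0 \<le> (1 + x) powr (- \<alpha>) - 1 + \<alpha> * x" by linarith
  show "(1 + x) powr (- \<alpha>) - 1 + \<alpha> * x \<le> 2 * x powr (1 + l)"
  proof (cases "x \<le> 1")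
    case True
    have ln2: "x - x\<^sup>2 \<le> ln (1 + x)" using ln_one_plus_pos_lower_bound[of x] x True by simp
    define D where "D = 1 + \<alpha> * (x - x\<^sup>2)"
    have "x - x\<^sup>2 \<ge> 0" using True x by (simp add: power2_eq_square mult_left_le_one_le)
    hence D1: "D \<ge> 1" using a by (simp add: D_def)
    have "(1 + x) powr \<alpha> \<ge> 1 + \<alpha> * ln (1 + x)" using powr_ge_one_plus_ln x by simp
    moreover have "\<alpha> * ln (1 + x) \<ge> \<alpha> * (x - x\<^sup>2)" using ln2 a by (simp add: mult_left_mono)
    ultimately have PD: "(1 + x) powr \<alpha> \<ge> D" unfolding D_def by linarith
    have "(1 + x) powr (- \<alpha>) = 1 / (1 + x) powr \<alpha>" by (simp add: powr_minus divide_inverse)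
    also have "\<dots> \<le> 1 / D" using PD D1 by (simp add: frac_le)
    also have "1 / D \<le> 1 - \<alpha> * x + 2 * x\<^sup>2"
    proof -
      have "1 \<le> D * (1 - \<alpha> * x + 2 * x\<^sup>2)"
      proof -
        have "D * (1 - \<alpha> * x + 2 * x\<^sup>2) - 1 = x\<^sup>2 * ((2 - \<alpha> - \<alpha>\<^sup>2) + x * (2 * \<alpha> + \<alpha>\<^sup>2) - 2 * \<alpha> * x\<^sup>2)"
          by (simp add: D_def algebra_simps power2_eq_square)
        moreover have "(2 - \<alpha> - \<alpha>\<^sup>2) + x * (2 * \<alpha> + \<alpha>\<^sup>2) - 2 * \<alpha> * x\<^sup>2 \<ge> 0"
        proof -
          have "x * (2 * \<alpha> + \<alpha>\<^sup>2) - 2 * \<alpha> * x\<^sup>2 = x * \<alpha> * (2 * (1 - x) + \<alpha>)"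
            by (simp add: algebra_simps power2_eq_square)
          moreover have "x * \<alpha> * (2 * (1 - x) + \<alpha>) \<ge> 0" using x a True by simp
          moreover have "2 - \<alpha> - \<alpha>\<^sup>2 \<ge> 0" using a by (simp add: power2_eq_square) (smt (verit) mult_le_one)
          ultimately show ?thesis by linarith
        qed
        ultimately show ?thesis by (metis diff_ge_0_iff_ge zero_le_mult_iff zero_le_power2)
      qed
      then show ?thesis using D1 by (simp add: divide_simps mult.commute)
    qed
    finally have "(1 + x) powr (- \<alpha>) - 1 + \<alpha> * x \<le> 2 * x\<^sup>2" by simp
    also have "x\<^sup>2 \<le> x powr (1 + l)"
    proof -
      have "x powr 2 \<le> x powr (1 + l)" using x True l by (intro powr_mono') auto
      thus ?thesis using x by simp
    qed
    finally show ?thesis by simp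
  next
    case False
    have "(1 + x) powr \<alpha> \<ge> 1" using powr_mono[of 0 \<alpha> "1 + x"] x a by simp
    hence "(1 + x) powr (- \<alpha>) \<le> 1" by (simp add: powr_minus inverse_le_1_iff)
    hence "(1 + x) powr (- \<alpha>) - 1 + \<alpha> * x \<le> x" using a x by (smt (verit) mult_le_cancel_right1)
    also have "x \<le> x powr (1 + l)" using False l by (simp add: powr_mono[of 1 "1 + l" x, simplified])
    finally show ?thesis using x by (smt (verit) powr_gt_zero)
  qed
qed

lemma kminus_core:
  fixes x \<alpha> l :: real
  assumes x: "0 < x" "x < 1" and a: "0 < \<alpha>" "\<alpha> < 1" and l: "0 \<le> l" "l \<le> 1"
  shows "0 \<le> (1 - x) powr (- \<alpha>) - 1 - \<alpha> * x"
    and "(1 - x) powr (- \<alpha>) - 1 - \<alpha> * x \<le> 4 * (1 - x) powr (- \<alpha>) * x powr (1 + l)"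
proof -
  have lnx: "ln (1 - x) \<le> - x" using ln_le_minus_one[of "1 - x"] x by simp
  have "(1 - x) powr (- \<alpha>) \<ge> 1 + (- \<alpha>) * ln (1 - x)"
    using powr_ge_one_plus_ln[of "1 - x" "- \<alpha>"] x by simp
  moreover have "(- \<alpha>) * ln (1 - x) \<ge> \<alpha> * x"
  proof -
    have "\<alpha> * x \<le> \<alpha> * (- ln (1 - x))" using lnx a by (intro mult_left_mono) auto
    thus ?thesis by simp
  qed
  ultimately show "0 \<le> (1 - x) powr (- \<alpha>) - 1 - \<alpha> * x" by linarith
  define P where "P = (1 - x) powr \<alpha>"
  have P0: "P > 0" using x by (simp add: P_def)
  have Pm: "(1 - x) powr (- \<alpha>) = 1 / P" by (simp add: P_def powr_minus divide_inverse)
  have key: "1 - P * (1 + \<alpha> * x) \<le> 4 * x\<^sup>2"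
  proof (cases "x \<le> 1/2")
    case True
    have ln2: "ln (1 - x) \<ge> - x / (1 - x)"
    proof -
      have "ln (1 / (1 - x)) \<le> 1 / (1 - x) - 1" using ln_le_minus_one[of "1 / (1 - x)"] x by simp
      moreover have "ln (1 / (1 - x)) = - ln (1 - x)" using x by (simp add: ln_div)
      moreover have "1 / (1 - x) - 1 = x / (1 - x)" using x by (simp add: field_simps)
      ultimately show ?thesis by simp
    qed
    have "P \<ge> 1 + \<alpha> * ln (1 - x)" unfolding P_def using powr_ge_one_plus_ln x by simp
    moreover have "\<alpha> * ln (1 - x) \<ge> \<alpha> * (- x / (1 - x))" using ln2 a by (intro mult_left_mono) auto
    ultimately have P1: "P \<ge> 1 - \<alpha> * x / (1 - x)" by simp
    have q: "x / (1 - x) \<le> 2 * x" using x True by (simp add: field_simps)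
    have "\<alpha> * x / (1 - x) \<le> x / (1 - x)" using a x by (simp add: divide_right_mono)
    also have "\<dots> \<le> 1" using x True by (simp add: field_simps)
    finally have nn: "1 - \<alpha> * x / (1 - x) \<ge> 0" by simp
    have "P * (1 + \<alpha> * x) \<ge> (1 - \<alpha> * x / (1 - x)) * (1 + \<alpha> * x)"
      using P1 a x by (intro mult_right_mono) auto
    moreover have "(1 - \<alpha> * x / (1 - x)) * (1 + \<alpha> * x) = 1 - (\<alpha> + \<alpha>\<^sup>2) * x * (x / (1 - x))"
      using x by (simp add: field_simps power2_eq_square)
    moreover have "(\<alpha> + \<alpha>\<^sup>2) * x * (x / (1 - x)) \<le> 2 * x * (2 * x)"
    proof (intro mult_mono)
      show "\<alpha> + \<alpha>\<^sup>2 \<le> 2" using a by (simp add: power2_eq_square) (smt (verit) mult_le_one)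
    qed (use q x a in auto)
    ultimately show ?thesis by (simp add: power2_eq_square)
  next
    case False
    have "P * (1 + \<alpha> * x) \<ge> 0" using P0 a x by simp
    moreover have "4 * x\<^sup>2 \<ge> 1"
    proof -
      have h: "1 \<le> 2 * x" using False by simp
      have "1 * 1 \<le> (2 * x) * (2 * x)" by (rule mult_mono) (use h in auto)
      thus ?thesis by (simp add: power2_eq_square)
    qed
    ultimately show ?thesis by linarith
  qed
  have "(1 - x) powr (- \<alpha>) - 1 - \<alpha> * x = (1 / P) * (1 - P * (1 + \<alpha> * x))"
    using P0 by (simp add: Pm field_simps)
  also have "\<dots> \<le> (1 / P) * (4 * x\<^sup>2)" using key P0 by (intro mult_left_mono) auto
  also have "x\<^sup>2 \<le> x powr (1 + l)"
  proof -
    have "x powr 2 \<le> x powr (1 + l)" using x l by (intro powr_mono') auto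
    thus ?thesis using x by simp
  qed
  hence "(1 / P) * (4 * x\<^sup>2) \<le> (1 / P) * (4 * x powr (1 + l))" using P0 by (intro mult_left_mono) auto
  finally show "(1 - x) powr (- \<alpha>) - 1 - \<alpha> * x \<le> 4 * (1 - x) powr (- \<alpha>) * x powr (1 + l)"
    by (simp add: Pm)
qed

lemma kp_bound:
  fixes u h \<alpha> l \<gamma> :: real
  assumes u: "u > 0" and h: "h > 0" and a: "0 < \<alpha>" "\<alpha> < 1" and l: "0 \<le> l" "l \<le> 1"
  shows "\<bar>(u + h) powr (- \<alpha>) - u powr (- \<alpha>) + \<alpha> * h * u powr (- \<alpha> - 1)\<bar> * u powr \<gamma>
     \<le> 2 * h powr (1 + l) * u powr (\<gamma> - \<alpha> - 1 - l)"
proof -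
  define x where "x = h / u"
  have x: "x > 0" using u h by (simp add: x_def)
  have e1: "(u + h) powr (- \<alpha>) = u powr (- \<alpha>) * (1 + x) powr (- \<alpha>)"
  proof -
    have "u + h = u * (1 + x)" using u by (simp add: x_def field_simps)
    thus ?thesis using u x by (simp add: powr_mult)
  qed
  have e2: "\<alpha> * h * u powr (- \<alpha> - 1) = u powr (- \<alpha>) * (\<alpha> * x)"
    using u by (simp add: x_def powr_diff field_simps)
  have E: "(u + h) powr (- \<alpha>) - u powr (- \<alpha>) + \<alpha> * h * u powr (- \<alpha> - 1)
      = u powr (- \<alpha>) * ((1 + x) powr (- \<alpha>) - 1 + \<alpha> * x)"
    unfolding e1 e2 by (simp add: algebra_simps)
  have b1: "0 \<le> (1 + x) powr (- \<alpha>) - 1 + \<alpha> * x" and b2: "(1 + x) powr (- \<alpha>) - 1 + \<alpha> * x \<le> 2 * x powr (1 + l)"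
    using kplus_core[OF x a l] by auto
  have "\<bar>(u + h) powr (- \<alpha>) - u powr (- \<alpha>) + \<alpha> * h * u powr (- \<alpha> - 1)\<bar> * u powr \<gamma>
      = u powr (- \<alpha>) * ((1 + x) powr (- \<alpha>) - 1 + \<alpha> * x) * u powr \<gamma>"
    unfolding E abs_mult abs_of_nonneg[OF b1] by simp
  also have "\<dots> \<le> u powr (- \<alpha>) * (2 * x powr (1 + l)) * u powr \<gamma>"
    using b2 by (intro mult_right_mono mult_left_mono) auto
  also have "x powr (1 + l) = h powr (1 + l) / u powr (1 + l)"
    using u h by (simp add: x_def powr_divide)
  also have "u powr (- \<alpha>) * (2 * (h powr (1 + l) / u powr (1 + l))) * u powr \<gamma>
      = 2 * h powr (1 + l) * (u powr (- \<alpha>) * u powr \<gamma> / u powr (1 + l))"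
    by (simp add: divide_inverse mult_ac)
  also have "u powr (- \<alpha>) * u powr \<gamma> / u powr (1 + l) = u powr (\<gamma> - \<alpha> - 1 - l)"
  proof -
    have "u powr (- \<alpha>) * u powr \<gamma> / u powr (1 + l) = u powr (- \<alpha> + \<gamma> - (1 + l))"
      by (simp only: powr_add powr_diff)
    also have "- \<alpha> + \<gamma> - (1 + l) = \<gamma> - \<alpha> - 1 - l" by simp
    finally show ?thesis .
  qed
  finally show ?thesis .
qed

lemma km_bound:
  fixes w \<eta> \<alpha> l \<gamma> :: real
  assumes w: "w > \<eta>" and h: "\<eta> > 0" and a: "0 < \<alpha>" "\<alpha> < 1" and l: "0 \<le> l" "l \<le> 1"
    and g: "\<gamma> \<le> 1 + l"
  shows "\<bar>(w - \<eta>) powr (- \<alpha>) - w powr (- \<alpha>) - \<alpha> * \<eta> * w powr (- \<alpha> - 1)\<bar> * w powr \<gamma>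
     \<le> 4 * \<eta> powr (1 + l) * (w - \<eta>) powr (\<gamma> - \<alpha> - 1 - l)"
proof -
  have w0: "w > 0" using w h by simp
  define x where "x = \<eta> / w"
  have x: "0 < x" "x < 1" using w h w0 by (auto simp: x_def)
  have wx: "w - \<eta> = w * (1 - x)" using w0 by (simp add: x_def field_simps)
  have e1: "(w - \<eta>) powr (- \<alpha>) = w powr (- \<alpha>) * (1 - x) powr (- \<alpha>)"
    using w0 x by (simp add: wx powr_mult)
  have e2: "\<alpha> * \<eta> * w powr (- \<alpha> - 1) = w powr (- \<alpha>) * (\<alpha> * x)"
    using w0 by (simp add: x_def powr_diff field_simps)
  have E: "(w - \<eta>) powr (- \<alpha>) - w powr (- \<alpha>) - \<alpha> * \<eta> * w powr (- \<alpha> - 1)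
      = w powr (- \<alpha>) * ((1 - x) powr (- \<alpha>) - 1 - \<alpha> * x)"
    unfolding e1 e2 by (simp add: algebra_simps)
  have b1: "0 \<le> (1 - x) powr (- \<alpha>) - 1 - \<alpha> * x"
    and b2: "(1 - x) powr (- \<alpha>) - 1 - \<alpha> * x \<le> 4 * (1 - x) powr (- \<alpha>) * x powr (1 + l)"
    using kminus_core[OF x a l] by auto
  have "\<bar>(w - \<eta>) powr (- \<alpha>) - w powr (- \<alpha>) - \<alpha> * \<eta> * w powr (- \<alpha> - 1)\<bar> * w powr \<gamma>
      = w powr (- \<alpha>) * ((1 - x) powr (- \<alpha>) - 1 - \<alpha> * x) * w powr \<gamma>"
    unfolding E abs_mult abs_of_nonneg[OF b1] by simp
  also have "\<dots> \<le> w powr (- \<alpha>) * (4 * (1 - x) powr (- \<alpha>) * x powr (1 + l)) * w powr \<gamma>"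
    using b2 by (intro mult_right_mono mult_left_mono) auto
  also have "\<dots> = 4 * (w - \<eta>) powr (- \<alpha>) * \<eta> powr (1 + l) * (w powr \<gamma> / w powr (1 + l))"
  proof -
    have xp: "x powr (1 + l) = \<eta> powr (1 + l) / w powr (1 + l)"
      using w0 h by (simp add: x_def powr_divide)
    show ?thesis unfolding xp e1 by (simp add: divide_inverse mult_ac)
  qed
  also have "w powr \<gamma> / w powr (1 + l) = w powr (\<gamma> - 1 - l)"
  proof -
    have "w powr (\<gamma> - (1 + l)) = w powr \<gamma> / w powr (1 + l)" by (simp only: powr_diff)
    moreover have "\<gamma> - (1 + l) = \<gamma> - 1 - l" by simp
    ultimately show ?thesis by simp
  qed
  also have "w powr (\<gamma> - 1 - l) \<le> (w - \<eta>) powr (\<gamma> - 1 - l)"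
    using g w h by (intro powr_mono2') auto
  hence "4 * (w - \<eta>) powr (- \<alpha>) * \<eta> powr (1 + l) * w powr (\<gamma> - 1 - l)
      \<le> 4 * (w - \<eta>) powr (- \<alpha>) * \<eta> powr (1 + l) * (w - \<eta>) powr (\<gamma> - 1 - l)"
    by (intro mult_left_mono) auto
  also have "4 * (w - \<eta>) powr (- \<alpha>) * \<eta> powr (1 + l) * (w - \<eta>) powr (\<gamma> - 1 - l)
      = 4 * \<eta> powr (1 + l) * (w - \<eta>) powr (\<gamma> - \<alpha> - 1 - l)"
  proof -
    have "(w - \<eta>) powr (- \<alpha>) * (w - \<eta>) powr (\<gamma> - 1 - l) = (w - \<eta>) powr (- \<alpha> + (\<gamma> - 1 - l))"
      by (simp only: powr_add)
    also have "- \<alpha> + (\<gamma> - 1 - l) = \<gamma> - \<alpha> - 1 - l" by simp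
    finally show ?thesis by (simp add: mult_ac)
  qed
  finally show ?thesis .
qed

lemma integral_norm_bound_except:
  fixes f :: "real \<Rightarrow> 'b::banach"
  assumes f: "f integrable_on S" and g: "g integrable_on S"
    and le: "\<And>x. x \<in> S \<Longrightarrow> x \<noteq> a \<Longrightarrow> norm (f x) \<le> g x" and ga: "0 \<le> g a"
  shows "norm (integral S f) \<le> integral S g"
proof -
  define f' where "f' = (\<lambda>x. if x = a then 0 else f x)"
  have eq: "integral S f' = integral S f"
    by (rule integral_spike[of "{a}"]) (auto simp: f'_def)
  have f': "f' integrable_on S"
    by (rule integrable_spike[OF f, of "{a}"]) (auto simp: f'_def)
  have "norm (integral S f') \<le> integral S g"
    by (rule integral_norm_bound_integral[OF f' g]) (use le ga in \<open>auto simp: f'_def\<close>)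
  thus ?thesis using eq by simp
qed

lemma powr_kernel_integrable:
  fixes a c p :: real
  assumes "a \<le> c" "p > -1"
  shows "(\<lambda>s. (c - s) powr p) integrable_on {a..c}"
    and "integral {a..c} (\<lambda>s. (c - s) powr p) = (c - a) powr (p + 1) / (p + 1)"
  using powr_kernel_has_integral[OF assms] by (auto simp: has_integral_iff)

lemma powr_split_le:
  fixes h l T :: real
  assumes "0 \<le> h" "h \<le> T" "0 \<le> l"
  shows "h powr (1 + 2 * l) \<le> T powr l * h powr (1 + l)"
proof -
  have "h powr (1 + 2 * l) = h powr (1 + l) * h powr l" by (simp add: powr_add[symmetric] algebra_simps)
  also have "\<dots> \<le> h powr (1 + l) * T powr l" using assms by (intro mult_left_mono powr_mono2) auto
  finally show ?thesis by (simp add: mult_ac)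
qed

lemma key_estimate:
  fixes R :: "real \<Rightarrow> 'b::banach"
  assumes tT: "0 < t" "t \<le> T" and a: "0 < \<alpha>" "\<alpha> < 1" and g: "\<alpha> < \<gamma>" "\<gamma> \<le> 1"
    and contR: "continuous_on {0..T} R" and Rt: "R t = 0"
    and bnd: "\<And>s. s \<in> {0..T} \<Longrightarrow> norm (R s) \<le> C * \<bar>s - t\<bar> powr \<gamma>" and C0: "C \<ge> 0"
  shows "\<exists>M. \<forall>\<tau>\<in>{0..T}. norm (integral {0..\<tau>} (\<lambda>s. (\<tau> - s) powr (-\<alpha>) *\<^sub>R R s)
        - integral {0..t} (\<lambda>s. (t - s) powr (-\<alpha>) *\<^sub>R R s)
        - (\<tau> - t) *\<^sub>R (- \<alpha> *\<^sub>R integral {0..t} (\<lambda>s. (t - s) powr (-\<alpha>-1) *\<^sub>R R s)))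
      \<le> M * \<bar>\<tau> - t\<bar> powr (1 + (\<gamma> - \<alpha>) / 2)"
proof -
  define l where "l = (\<gamma> - \<alpha>) / 2"
  have l: "0 < l" "l \<le> 1" using g a by (auto simp: l_def)
  have gl: "\<gamma> - \<alpha> - 1 - l = l - 1" by (simp add: l_def field_simps)
  have gl2: "\<gamma> - \<alpha> = 2 * l" by (simp add: l_def)
  define f where "f = (\<lambda>\<tau> s. (\<tau> - s) powr (-\<alpha>) *\<^sub>R R s)"
  define G where "G = (\<lambda>s. (t - s) powr (-\<alpha>-1) *\<^sub>R R s)"
  define L where "L = integral {0..t} G"
  obtain B where B: "B > 0" "\<And>s. s \<in> {0..T} \<Longrightarrow> norm (R s) \<le> B"
    using compact_imp_bounded[OF compact_continuous_image[OF contR compact_Icc]]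
    unfolding bounded_pos by auto
  have If: "f c integrable_on {0..c}" if c: "c \<in> {0..T}" for c
    unfolding f_def
  proof (rule sing_integrable[where C=B and \<gamma>=0])
    show "continuous_on {0..c} R" using c by (auto intro: continuous_on_subset[OF contR])
    show "norm (R s) \<le> B * (c - s) powr 0" if "s \<in> {0..<c}" for s
      using B(2)[of s] that c by auto
  qed (use c a B in auto)
  have IG: "G integrable_on {0..t}"
    unfolding G_def
  proof (rule sing_integrable[where C=C and \<gamma>=\<gamma>])
    show "continuous_on {0..t} R" using tT by (auto intro: continuous_on_subset[OF contR])
    show "norm (R s) \<le> C * (t - s) powr \<gamma>" if "s \<in> {0..<t}" for s
      using bnd[of s] that tT by (auto simp: abs_minus_commute abs_of_nonneg)
  qed (use tT a g C0 in auto)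
  have TL: "0 \<le> T powr l" by simp
  define M where "M = C * T powr l / (1 - \<alpha>) + 2 * C * T powr l / l + C * T powr l
      + \<alpha> * C * T powr l / (2 * l) + 4 * C * T powr l / l"
  have Mterms: "0 \<le> C * T powr l / (1 - \<alpha>)" "0 \<le> 2 * C * T powr l / l" "0 \<le> C * T powr l"
      "0 \<le> \<alpha> * C * T powr l / (2 * l)" "0 \<le> 4 * C * T powr l / l"
    using C0 a l by auto
  have main: "norm (integral {0..\<tau>} (f \<tau>) - integral {0..t} (f t) - (\<tau> - t) *\<^sub>R (- \<alpha> *\<^sub>R L))
      \<le> M * \<bar>\<tau> - t\<bar> powr (1 + l)" if \<tau>: "\<tau> \<in> {0..T}" for \<tau>
  proof (cases rule: linorder_cases[of \<tau> t])
    case equal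
    then show ?thesis by simp
  next
    case greater
    define h where "h = \<tau> - t"
    have h: "h > 0" "h \<le> T" using greater \<tau> tT by (auto simp: h_def)
    have habs: "\<bar>\<tau> - t\<bar> = h" using h by (simp add: h_def)
    have t0T: "t \<in> {0..T}" using tT by auto
    have Ift: "f \<tau> integrable_on {0..t}" "f \<tau> integrable_on {t..\<tau>}"
      using If[OF \<tau>] greater tT by (auto intro: integrable_subinterval_real)
    have sp1: "integral {0..\<tau>} (f \<tau>) = integral {0..t} (f \<tau>) + integral {t..\<tau>} (f \<tau>)"
      by (rule Henstock_Kurzweil_Integration.integral_combine[symmetric]) (use If[OF \<tau>] greater tT in auto)
    define k where "k = (\<lambda>s. f \<tau> s - f t s + (\<alpha> * h) *\<^sub>R G s)"
    have Ik: "k integrable_on {0..t}"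
      unfolding k_def using Ift(1) If[OF t0T] IG
      by (intro integrable_add integrable_diff integrable_cmul)
    have intk: "integral {0..t} k = integral {0..t} (f \<tau>) - integral {0..t} (f t) + (\<alpha> * h) *\<^sub>R L"
      unfolding k_def L_def using Ift(1) If[OF t0T] IG
      by (simp add: integral_add integral_diff integrable_diff integrable_cmul)
    have D: "integral {0..\<tau>} (f \<tau>) - integral {0..t} (f t) - (\<tau> - t) *\<^sub>R (- \<alpha> *\<^sub>R L)
        = integral {t..\<tau>} (f \<tau>) + integral {0..t} k"
      unfolding sp1 intk by (simp add: h_def algebra_simps)
    have b1: "norm (integral {t..\<tau>} (f \<tau>)) \<le> C * T powr l / (1 - \<alpha>) * h powr (1 + l)"
    proof -
      have Ik1: "(\<lambda>s. (C * h powr \<gamma>) * (\<tau> - s) powr (- \<alpha>)) integrable_on {t..\<tau>}"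
        using powr_kernel_integrable(1)[of t \<tau> "-\<alpha>"] greater a by (auto intro: integrable_on_mult_right)
      have "norm (integral {t..\<tau>} (f \<tau>)) \<le> integral {t..\<tau>} (\<lambda>s. (C * h powr \<gamma>) * (\<tau> - s) powr (- \<alpha>))"
      proof (rule integral_norm_bound_integral[OF Ift(2) Ik1])
        fix s assume s: "s \<in> {t..\<tau>}"
        have sT: "s \<in> {0..T}" using s tT \<tau> by auto
        have "norm (f \<tau> s) = (\<tau> - s) powr (- \<alpha>) * norm (R s)" by (simp add: f_def)
        also have "\<dots> \<le> (\<tau> - s) powr (- \<alpha>) * (C * \<bar>s - t\<bar> powr \<gamma>)"
          by (intro mult_left_mono bnd sT) auto
        also have "\<bar>s - t\<bar> powr \<gamma> \<le> h powr \<gamma>"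
          using s g a by (intro powr_mono2) (auto simp: h_def)
        hence "(\<tau> - s) powr (- \<alpha>) * (C * \<bar>s - t\<bar> powr \<gamma>) \<le> (\<tau> - s) powr (- \<alpha>) * (C * h powr \<gamma>)"
          using C0 by (intro mult_left_mono) auto
        finally show "norm (f \<tau> s) \<le> (C * h powr \<gamma>) * (\<tau> - s) powr (- \<alpha>)" by (simp add: mult_ac)
      qed
      also have "\<dots> = (C * h powr \<gamma>) * (h powr (1 - \<alpha>) / (1 - \<alpha>))"
        using powr_kernel_integrable(2)[of t \<tau> "-\<alpha>"] greater a by (simp add: h_def)
      also have "\<dots> = C / (1 - \<alpha>) * h powr (1 + 2 * l)"
        using gl2 by (simp add: powr_add[symmetric] algebra_simps)
      also have "\<dots> \<le> C / (1 - \<alpha>) * (T powr l * h powr (1 + l))"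
        using h l C0 a by (intro mult_left_mono powr_split_le) auto
      finally show ?thesis by (simp add: mult_ac)
    qed
    have b2: "norm (integral {0..t} k) \<le> 2 * C * T powr l / l * h powr (1 + l)"
    proof -
      have Ik2: "(\<lambda>s. (2 * C * h powr (1 + l)) * (t - s) powr (l - 1)) integrable_on {0..t}"
        using powr_kernel_integrable(1)[of 0 t "l - 1"] tT l by (auto intro: integrable_on_mult_right)
      have "norm (integral {0..t} k) \<le> integral {0..t} (\<lambda>s. (2 * C * h powr (1 + l)) * (t - s) powr (l - 1))"
      proof (rule integral_norm_bound_integral[OF Ik Ik2])
        fix s assume s: "s \<in> {0..t}"
        show "norm (k s) \<le> (2 * C * h powr (1 + l)) * (t - s) powr (l - 1)"
        proof (cases "s = t")
          case True then show ?thesis by (simp add: k_def f_def G_def Rt)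
        next
          case False
          hence u: "t - s > 0" using s by auto
          have sT: "s \<in> {0..T}" using s tT by auto
          define kk where "kk = (\<tau> - s) powr (- \<alpha>) - (t - s) powr (- \<alpha>) + \<alpha> * h * (t - s) powr (- \<alpha> - 1)"
          have ks: "k s = kk *\<^sub>R R s" by (simp add: k_def f_def G_def kk_def algebra_simps)
          have kb: "\<bar>kk\<bar> * (t - s) powr \<gamma> \<le> 2 * h powr (1 + l) * (t - s) powr (\<gamma> - \<alpha> - 1 - l)"
            using kp_bound[OF u h(1) a less_imp_le[OF l(1)] l(2), of \<gamma>] by (simp add: kk_def h_def)
          have "norm (k s) = \<bar>kk\<bar> * norm (R s)" by (simp add: ks)
          also have "\<dots> \<le> \<bar>kk\<bar> * (C * (t - s) powr \<gamma>)"
            using bnd[OF sT] s by (intro mult_left_mono) (auto simp: abs_minus_commute abs_of_nonneg)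
          also have "\<dots> = C * (\<bar>kk\<bar> * (t - s) powr \<gamma>)" by simp
          also have "\<dots> \<le> C * (2 * h powr (1 + l) * (t - s) powr (\<gamma> - \<alpha> - 1 - l))"
            using kb C0 by (intro mult_left_mono) auto
          finally show ?thesis by (simp add: gl mult_ac)
        qed
      qed
      also have "\<dots> = (2 * C * h powr (1 + l)) * (t powr l / l)"
        using powr_kernel_integrable(2)[of 0 t "l - 1"] tT l by simp
      also have "\<dots> \<le> (2 * C * h powr (1 + l)) * (T powr l / l)"
        using tT l C0 by (intro mult_left_mono divide_right_mono powr_mono2) auto
      finally show ?thesis by (simp add: mult_ac)
    qed
    have "norm (integral {0..\<tau>} (f \<tau>) - integral {0..t} (f t) - (\<tau> - t) *\<^sub>R (- \<alpha> *\<^sub>R L))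
        \<le> norm (integral {t..\<tau>} (f \<tau>)) + norm (integral {0..t} k)"
      unfolding D by (rule norm_triangle_ineq)
    also have "\<dots> \<le> (C * T powr l / (1 - \<alpha>) + 2 * C * T powr l / l) * h powr (1 + l)"
      using b1 b2 by (simp add: algebra_simps)
    also have "\<dots> \<le> M * h powr (1 + l)"
      using Mterms by (intro mult_right_mono) (auto simp: M_def)
    finally show ?thesis by (simp add: habs)
  next
    case less
    define \<eta> where "\<eta> = t - \<tau>"
    have \<eta>: "\<eta> > 0" "\<eta> \<le> T" using less \<tau> tT by (auto simp: \<eta>_def)
    have habs: "\<bar>\<tau> - t\<bar> = \<eta>" using \<eta> by (simp add: \<eta>_def)
    have t0T: "t \<in> {0..T}" using tT by auto
    have Ift: "f t integrable_on {0..\<tau>}" "f t integrable_on {\<tau>..t}"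
      using If[OF t0T] less \<tau> by (auto intro: integrable_subinterval_real)
    have IGs: "G integrable_on {0..\<tau>}" "G integrable_on {\<tau>..t}"
      using IG less \<tau> by (auto intro: integrable_subinterval_real)
    have sp2: "integral {0..t} (f t) = integral {0..\<tau>} (f t) + integral {\<tau>..t} (f t)"
      by (rule Henstock_Kurzweil_Integration.integral_combine[symmetric]) (use If[OF t0T] less \<tau> in auto)
    have sp3: "L = integral {0..\<tau>} G + integral {\<tau>..t} G"
      unfolding L_def
      by (rule Henstock_Kurzweil_Integration.integral_combine[symmetric]) (use IG less \<tau> in auto)
    define k where "k = (\<lambda>s. f \<tau> s - f t s - (\<alpha> * \<eta>) *\<^sub>R G s)"
    have Ik: "k integrable_on {0..\<tau>}"
      unfolding k_def using If[OF \<tau>] Ift(1) IGs(1)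
      by (intro integrable_diff integrable_cmul)
    have intk: "integral {0..\<tau>} k = integral {0..\<tau>} (f \<tau>) - integral {0..\<tau>} (f t) - (\<alpha> * \<eta>) *\<^sub>R integral {0..\<tau>} G"
      unfolding k_def using If[OF \<tau>] Ift(1) IGs(1)
      by (simp add: integral_diff integrable_diff integrable_cmul)
    have D: "integral {0..\<tau>} (f \<tau>) - integral {0..t} (f t) - (\<tau> - t) *\<^sub>R (- \<alpha> *\<^sub>R L)
        = integral {0..\<tau>} k - integral {\<tau>..t} (f t) - (\<alpha> * \<eta>) *\<^sub>R integral {\<tau>..t} G"
      unfolding sp2 sp3 intk by (simp add: \<eta>_def algebra_simps)
    have b3: "norm (integral {\<tau>..t} (f t)) \<le> C * T powr l * \<eta> powr (1 + l)"
    proof -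
      have Ik1: "(\<lambda>s. C * (t - s) powr (\<gamma> - \<alpha>)) integrable_on {\<tau>..t}"
        using powr_kernel_integrable(1)[of \<tau> t "\<gamma> - \<alpha>"] less g by (auto intro: integrable_on_mult_right)
      have "norm (integral {\<tau>..t} (f t)) \<le> integral {\<tau>..t} (\<lambda>s. C * (t - s) powr (\<gamma> - \<alpha>))"
      proof (rule integral_norm_bound_integral[OF Ift(2) Ik1])
        fix s assume s: "s \<in> {\<tau>..t}"
        have sT: "s \<in> {0..T}" using s tT \<tau> by auto
        show "norm (f t s) \<le> C * (t - s) powr (\<gamma> - \<alpha>)"
        proof (cases "s = t")
          case True then show ?thesis by (simp add: f_def Rt)
        next
          case False
          hence u: "t - s > 0" using s by auto
          have "norm (f t s) = (t - s) powr (- \<alpha>) * norm (R s)" by (simp add: f_def)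
          also have "\<dots> \<le> (t - s) powr (- \<alpha>) * (C * (t - s) powr \<gamma>)"
            using bnd[OF sT] s by (intro mult_left_mono) (auto simp: abs_minus_commute abs_of_nonneg)
          also have "\<dots> = C * ((t - s) powr (- \<alpha>) * (t - s) powr \<gamma>)" by simp
          also have "(t - s) powr (- \<alpha>) * (t - s) powr \<gamma> = (t - s) powr (\<gamma> - \<alpha>)"
            by (simp add: powr_add[symmetric])
          finally show ?thesis .
        qed
      qed
      also have "\<dots> = C * (\<eta> powr (\<gamma> - \<alpha> + 1) / (\<gamma> - \<alpha> + 1))"
        using powr_kernel_integrable(2)[of \<tau> t "\<gamma> - \<alpha>"] less g by (simp add: \<eta>_def)
      also have "\<dots> \<le> C * \<eta> powr (1 + 2 * l)"
      proof -
        have "\<eta> powr (\<gamma> - \<alpha> + 1) / (\<gamma> - \<alpha> + 1) \<le> \<eta> powr (\<gamma> - \<alpha> + 1)"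
          using divide_left_mono[of 1 "\<gamma> - \<alpha> + 1" "\<eta> powr (\<gamma> - \<alpha> + 1)"] g by auto
        then show ?thesis using C0 gl2 by (intro mult_left_mono) (auto simp: add.commute)
      qed
      also have "\<dots> \<le> C * (T powr l * \<eta> powr (1 + l))"
        using \<eta> l C0 by (intro mult_left_mono powr_split_le) auto
      finally show ?thesis by (simp add: mult_ac)
    qed
    have b4: "norm ((\<alpha> * \<eta>) *\<^sub>R integral {\<tau>..t} G) \<le> \<alpha> * C * T powr l / (2 * l) * \<eta> powr (1 + l)"
    proof -
      have Ik1: "(\<lambda>s. C * (t - s) powr (\<gamma> - \<alpha> - 1)) integrable_on {\<tau>..t}"
        using powr_kernel_integrable(1)[of \<tau> t "\<gamma> - \<alpha> - 1"] less g by (auto intro: integrable_on_mult_right)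
      have "norm (integral {\<tau>..t} G) \<le> integral {\<tau>..t} (\<lambda>s. C * (t - s) powr (\<gamma> - \<alpha> - 1))"
      proof (rule integral_norm_bound_integral[OF IGs(2) Ik1])
        fix s assume s: "s \<in> {\<tau>..t}"
        have sT: "s \<in> {0..T}" using s tT \<tau> by auto
        show "norm (G s) \<le> C * (t - s) powr (\<gamma> - \<alpha> - 1)"
        proof (cases "s = t")
          case True then show ?thesis by (simp add: G_def Rt)
        next
          case False
          hence u: "t - s > 0" using s by auto
          have "norm (G s) = (t - s) powr (- \<alpha> - 1) * norm (R s)" by (simp add: G_def)
          also have "\<dots> \<le> (t - s) powr (- \<alpha> - 1) * (C * (t - s) powr \<gamma>)"
            using bnd[OF sT] s by (intro mult_left_mono) (auto simp: abs_minus_commute abs_of_nonneg)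
          also have "\<dots> = C * ((t - s) powr (- \<alpha> - 1) * (t - s) powr \<gamma>)" by simp
          also have "(t - s) powr (- \<alpha> - 1) * (t - s) powr \<gamma> = (t - s) powr (\<gamma> - \<alpha> - 1)"
            by (subst powr_add[symmetric]) (simp add: algebra_simps)
          finally show ?thesis .
        qed
      qed
      also have "\<dots> = C * (\<eta> powr (\<gamma> - \<alpha>) / (\<gamma> - \<alpha>))"
        using powr_kernel_integrable(2)[of \<tau> t "\<gamma> - \<alpha> - 1"] less g by (simp add: \<eta>_def)
      finally have n1: "norm (integral {\<tau>..t} G) \<le> C * (\<eta> powr (2 * l) / (2 * l))" by (simp add: gl2)
      have "norm ((\<alpha> * \<eta>) *\<^sub>R integral {\<tau>..t} G) = (\<alpha> * \<eta>) * norm (integral {\<tau>..t} G)"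
        using a \<eta> by simp
      also have "\<dots> \<le> (\<alpha> * \<eta>) * (C * (\<eta> powr (2 * l) / (2 * l)))"
        using n1 a \<eta> by (intro mult_left_mono) auto
      also have "\<dots> = \<alpha> * C / (2 * l) * (\<eta> * \<eta> powr (2 * l))" by simp
      also have "\<eta> * \<eta> powr (2 * l) = \<eta> powr (1 + 2 * l)"
        using \<eta> by (simp add: powr_add)
      also have "\<alpha> * C / (2 * l) * \<eta> powr (1 + 2 * l) \<le> \<alpha> * C / (2 * l) * (T powr l * \<eta> powr (1 + l))"
        using \<eta> l C0 a by (intro mult_left_mono powr_split_le) auto
      finally show ?thesis by (simp add: mult_ac)
    qed
    have b5: "norm (integral {0..\<tau>} k) \<le> 4 * C * T powr l / l * \<eta> powr (1 + l)"
    proof -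
      have Ik2: "(\<lambda>s. (4 * C * \<eta> powr (1 + l)) * (\<tau> - s) powr (l - 1)) integrable_on {0..\<tau>}"
        using powr_kernel_integrable(1)[of 0 \<tau> "l - 1"] \<tau> l by (auto intro: integrable_on_mult_right)
      have "norm (integral {0..\<tau>} k) \<le> integral {0..\<tau>} (\<lambda>s. (4 * C * \<eta> powr (1 + l)) * (\<tau> - s) powr (l - 1))"
      proof (rule integral_norm_bound_except[OF Ik Ik2, of \<tau>])
        fix s assume s: "s \<in> {0..\<tau>}" "s \<noteq> \<tau>"
        hence v: "\<tau> - s > 0" by auto
        have w: "t - s > \<eta>" using v by (simp add: \<eta>_def)
        have sT: "s \<in> {0..T}" using s \<tau> by auto
        define kk where "kk = (\<tau> - s) powr (- \<alpha>) - (t - s) powr (- \<alpha>) - \<alpha> * \<eta> * (t - s) powr (- \<alpha> - 1)"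
        have ks: "k s = kk *\<^sub>R R s" by (simp add: k_def f_def G_def kk_def algebra_simps)
        have kb: "\<bar>kk\<bar> * (t - s) powr \<gamma> \<le> 4 * \<eta> powr (1 + l) * (\<tau> - s) powr (\<gamma> - \<alpha> - 1 - l)"
          using km_bound[OF w \<eta>(1) a less_imp_le[OF l(1)] l(2), of \<gamma>] g l by (simp add: kk_def \<eta>_def)
        have "norm (k s) = \<bar>kk\<bar> * norm (R s)" by (simp add: ks)
        also have "\<dots> \<le> \<bar>kk\<bar> * (C * (t - s) powr \<gamma>)"
          using bnd[OF sT] s less by (intro mult_left_mono) (auto simp: abs_minus_commute abs_of_nonneg)
        also have "\<dots> = C * (\<bar>kk\<bar> * (t - s) powr \<gamma>)" by simp
        also have "\<dots> \<le> C * (4 * \<eta> powr (1 + l) * (\<tau> - s) powr (\<gamma> - \<alpha> - 1 - l))"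
          using kb C0 by (intro mult_left_mono) auto
        finally show "norm (k s) \<le> (4 * C * \<eta> powr (1 + l)) * (\<tau> - s) powr (l - 1)" by (simp add: gl mult_ac)
      qed simp
      also have "\<dots> = (4 * C * \<eta> powr (1 + l)) * (\<tau> powr l / l)"
        using powr_kernel_integrable(2)[of 0 \<tau> "l - 1"] \<tau> l by simp
      also have "\<dots> \<le> (4 * C * \<eta> powr (1 + l)) * (T powr l / l)"
        using \<tau> l C0 by (intro mult_left_mono divide_right_mono powr_mono2) auto
      finally show ?thesis by (simp add: mult_ac)
    qed
    have "norm (integral {0..\<tau>} (f \<tau>) - integral {0..t} (f t) - (\<tau> - t) *\<^sub>R (- \<alpha> *\<^sub>R L))
        \<le> norm (integral {0..\<tau>} k) + norm (integral {\<tau>..t} (f t)) + norm ((\<alpha> * \<eta>) *\<^sub>R integral {\<tau>..t} G)"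
      unfolding D
    proof -
      fix X Y Z :: 'b
      have "norm (X - Y - Z) \<le> norm (X - Y) + norm Z" by (rule norm_triangle_ineq4)
      also have "norm (X - Y) \<le> norm X + norm Y" by (rule norm_triangle_ineq4)
      finally show "norm (X - Y - Z) \<le> norm X + norm Y + norm Z" by simp
    qed
    also have "\<dots> \<le> (4 * C * T powr l / l + C * T powr l + \<alpha> * C * T powr l / (2 * l)) * \<eta> powr (1 + l)"
      using b3 b4 b5 by (simp add: algebra_simps)
    also have "\<dots> \<le> M * \<eta> powr (1 + l)"
      using Mterms by (intro mult_right_mono) (auto simp: M_def)
    finally show ?thesis by (simp add: habs)
  qed
  show ?thesis
    using main unfolding f_def G_def L_def l_def by blast
qed

lemma deriv_from_estimate:
  fixes F :: "real \<Rightarrow> 'b::real_normed_vector"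
  assumes l: "l > 0" and est: "\<And>\<tau>. \<tau> \<in> S \<Longrightarrow> norm (F \<tau> - F t - (\<tau> - t) *\<^sub>R D) \<le> M * \<bar>\<tau> - t\<bar> powr (1 + l)"
  shows "(F has_vector_derivative D) (at t within S)"
  unfolding has_vector_derivative_def has_derivative_within_alt
proof (intro conjI allI impI)
  show "bounded_linear (\<lambda>x. x *\<^sub>R D)" by (rule bounded_linear_scaleR_left)
  fix e :: real assume e: "e > 0"
  define M' where "M' = max M 0 + 1"
  have M': "M' > 0" "M \<le> M'" by (auto simp: M'_def)
  define d where "d = (e / M') powr (1 / l)"
  have d: "d > 0" using e M' by (simp add: d_def)
  have dl: "d powr l = e / M'" using e M' l by (simp add: d_def powr_powr)
  show "\<exists>d>0. \<forall>y\<in>S. norm (y - t) < d \<longrightarrow> norm (F y - F t - (y - t) *\<^sub>R D) \<le> e * norm (y - t)"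
  proof (intro exI conjI ballI impI)
    show "d > 0" by (rule d)
    fix y assume y: "y \<in> S" and yd: "norm (y - t) < d"
    show "norm (F y - F t - (y - t) *\<^sub>R D) \<le> e * norm (y - t)"
    proof (cases "y = t")
      case True then show ?thesis by simp
    next
      case False
      hence p: "\<bar>y - t\<bar> > 0" by simp
      have "norm (F y - F t - (y - t) *\<^sub>R D) \<le> M * \<bar>y - t\<bar> powr (1 + l)" by (rule est[OF y])
      also have "\<dots> \<le> M' * \<bar>y - t\<bar> powr (1 + l)" using M' by (intro mult_right_mono) auto
      also have "\<bar>y - t\<bar> powr (1 + l) = \<bar>y - t\<bar> * \<bar>y - t\<bar> powr l" using p by (simp add: powr_add)
      also have "\<bar>y - t\<bar> powr l \<le> d powr l" using yd l by (intro powr_mono2) auto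
      hence "M' * (\<bar>y - t\<bar> * \<bar>y - t\<bar> powr l) \<le> M' * (\<bar>y - t\<bar> * d powr l)"
        using M' by (intro mult_left_mono) auto
      also have "M' * (\<bar>y - t\<bar> * d powr l) = e * norm (y - t)" using M' by (simp add: dl)
      finally show ?thesis .
    qed
  qed
qed

lemma key_deriv:
  fixes R :: "real \<Rightarrow> 'b::banach"
  assumes tT: "0 < t" "t \<le> T" and a: "0 < \<alpha>" "\<alpha> < 1" and g: "\<alpha> < \<gamma>" "\<gamma> \<le> 1"
    and contR: "continuous_on {0..T} R" and Rt: "R t = 0"
    and bnd: "\<And>s. s \<in> {0..T} \<Longrightarrow> norm (R s) \<le> C * \<bar>s - t\<bar> powr \<gamma>" and C0: "C \<ge> 0"
  shows "((\<lambda>\<tau>. integral {0..\<tau>} (\<lambda>s. (\<tau> - s) powr (-\<alpha>) *\<^sub>R R s)) has_vector_derivative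
      (- \<alpha> *\<^sub>R integral {0..t} (\<lambda>s. (t - s) powr (-\<alpha>-1) *\<^sub>R R s))) (at t within {0..T})"
proof -
  obtain M where M: "\<forall>\<tau>\<in>{0..T}. norm (integral {0..\<tau>} (\<lambda>s. (\<tau> - s) powr (-\<alpha>) *\<^sub>R R s)
        - integral {0..t} (\<lambda>s. (t - s) powr (-\<alpha>) *\<^sub>R R s)
        - (\<tau> - t) *\<^sub>R (- \<alpha> *\<^sub>R integral {0..t} (\<lambda>s. (t - s) powr (-\<alpha>-1) *\<^sub>R R s)))
      \<le> M * \<bar>\<tau> - t\<bar> powr (1 + (\<gamma> - \<alpha>) / 2)"
    using key_estimate[OF tT a g contR Rt bnd C0] by blast
  show ?thesis
    by (rule deriv_from_estimate[where l="(\<gamma> - \<alpha>) / 2" and M=M]) (use g M in auto)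
qed

lemma key_integrable:
  fixes R :: "real \<Rightarrow> 'b::banach"
  assumes tT: "0 < t" "t \<le> T" and a: "0 < \<alpha>" "\<alpha> < 1" and g: "\<alpha> < \<gamma>"
    and contR: "continuous_on {0..T} R"
    and bnd: "\<And>s. s \<in> {0..T} \<Longrightarrow> norm (R s) \<le> C * \<bar>s - t\<bar> powr \<gamma>" and C0: "C \<ge> 0"
  shows "(\<lambda>s. (t - s) powr (-\<alpha>-1) *\<^sub>R R s) integrable_on {0..t}"
proof (rule sing_integrable[where C=C and \<gamma>=\<gamma>])
  show "continuous_on {0..t} R" using tT by (auto intro: continuous_on_subset[OF contR])
  show "norm (R s) \<le> C * (t - s) powr \<gamma>" if "s \<in> {0..<t}" for s
    using bnd[of s] that tT by (auto simp: abs_minus_commute abs_of_nonneg)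
qed (use tT a g C0 in auto)

typedef ('a::"{real_inner,complete_space}") wr = "UNIV :: 'a set" morphisms unwr wr by simp

setup_lifting type_definition_wr

instantiation wr :: ("{real_inner,complete_space}") real_inner
begin
lift_definition zero_wr :: "'a wr" is 0 .
lift_definition plus_wr :: "'a wr \<Rightarrow> 'a wr \<Rightarrow> 'a wr" is "(+)" .
lift_definition minus_wr :: "'a wr \<Rightarrow> 'a wr \<Rightarrow> 'a wr" is "(-)" .
lift_definition uminus_wr :: "'a wr \<Rightarrow> 'a wr" is uminus .
lift_definition scaleR_wr :: "real \<Rightarrow> 'a wr \<Rightarrow> 'a wr" is scaleR .
lift_definition norm_wr :: "'a wr \<Rightarrow> real" is norm .
lift_definition sgn_wr :: "'a wr \<Rightarrow> 'a wr" is sgn .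
lift_definition dist_wr :: "'a wr \<Rightarrow> 'a wr \<Rightarrow> real" is dist .
lift_definition inner_wr :: "'a wr \<Rightarrow> 'a wr \<Rightarrow> real" is inner .
definition uniformity_wr :: "('a wr \<times> 'a wr) filter"
  where "uniformity_wr = (INF e\<in>{0 <..}. principal {(x, y). dist x y < e})"
definition open_wr :: "'a wr set \<Rightarrow> bool"
  where "open_wr U \<longleftrightarrow> (\<forall>x\<in>U. eventually (\<lambda>(x', y). x' = x \<longrightarrow> y \<in> U) uniformity)"
instance
proof
  fix a b c :: "'a wr" and r s :: real and U :: "'a wr set"
  show "a + b + c = a + (b + c)" by transfer (simp add: add.assoc)
  show "a + b = b + a" by transfer (simp add: add.commute)
  show "0 + a = a" by transfer simp
  show "- a + a = 0" by transfer simp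
  show "a - b = a + - b" by transfer simp
  show "r *\<^sub>R (a + b) = r *\<^sub>R a + r *\<^sub>R b" by transfer (simp add: scaleR_add_right)
  show "(r + s) *\<^sub>R a = r *\<^sub>R a + s *\<^sub>R a" by transfer (simp add: scaleR_add_left)
  show "r *\<^sub>R s *\<^sub>R a = (r * s) *\<^sub>R a" by transfer simp
  show "1 *\<^sub>R a = a" by transfer simp
  show "sgn a = inverse (norm a) *\<^sub>R a" by transfer (simp add: sgn_div_norm)
  show "dist a b = norm (a - b)" by transfer (simp add: dist_norm)
  show "uniformity = (INF e\<in>{0<..}. principal {(x, y). dist (x::'a wr) y < e})" by (rule uniformity_wr_def)
  show "open U = (\<forall>x\<in>U. \<forall>\<^sub>F (x', y) in uniformity. x' = x \<longrightarrow> y \<in> U)" by (rule open_wr_def)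
  show "inner a b = inner b a" by transfer (rule inner_commute)
  show "inner (a + b) c = inner a c + inner b c" by transfer (rule inner_add_left)
  show "inner (r *\<^sub>R a) b = r * inner a b" by transfer simp
  show "0 \<le> inner a a" by transfer simp
  show "(inner a a = 0) = (a = 0)" by transfer simp
  show "norm a = sqrt (inner a a)" by transfer (rule norm_eq_sqrt_inner)
qed
end

lemma unwr_add: "unwr (a + b) = unwr a + unwr b" by transfer simp
lemma unwr_scaleR: "unwr (r *\<^sub>R a) = r *\<^sub>R unwr a" by transfer simp
lemma norm_unwr: "norm (unwr a) = norm a" by transfer simp
lemma unwr_diff: "unwr (a - b) = unwr a - unwr b" by transfer simp
lemma wr_add: "wr (x + y) = wr x + wr y" by transfer simp
lemma wr_scaleR: "wr (r *\<^sub>R x) = r *\<^sub>R wr x" by transfer simp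
lemma norm_wr: "norm (wr x) = norm x" by transfer simp
lemma wr_diff: "wr (x - y) = wr x - wr y" by transfer simp
lemma wr_zero: "wr 0 = 0" by transfer simp

lemma bounded_linear_unwr: "bounded_linear unwr"
  by (rule bounded_linear_intro[where K=1]) (auto simp: unwr_add unwr_scaleR norm_unwr)
lemma bounded_linear_wr: "bounded_linear wr"
  by (rule bounded_linear_intro[where K=1]) (auto simp: wr_add wr_scaleR norm_wr)

instance wr :: ("{real_inner,complete_space}") complete_space
proof
  fix X :: "nat \<Rightarrow> 'a wr" assume X: "Cauchy X"
  have "Cauchy (\<lambda>n. unwr (X n))"
    using X unfolding Cauchy_def by (simp add: dist_norm norm_unwr flip: unwr_diff)
  then obtain L where L: "(\<lambda>n. unwr (X n)) \<longlonglongrightarrow> L" using Cauchy_convergent convergent_def by blast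
  have "(\<lambda>n. wr (unwr (X n))) \<longlonglongrightarrow> wr L"
    by (rule bounded_linear.tendsto[OF bounded_linear_wr L])
  then show "convergent X" by (auto simp: convergent_def unwr_inverse)
qed

instance wr :: ("{real_inner,complete_space}") banach ..

lemma cont_wr: "continuous_on S R \<Longrightarrow> continuous_on S (\<lambda>s. wr (R s))"
proof -
  assume c: "continuous_on S R"
  have "continuous_on (R ` S) wr" by (rule linear_continuous_on[OF bounded_linear_wr])
  from continuous_on_compose[OF c this] show ?thesis by (simp add: o_def)
qed

lemma unwr_minus: "unwr (- a) = - unwr a" by transfer simp

lemma unwr_integrable:
  assumes "(\<lambda>s. k s *\<^sub>R wr (R s)) integrable_on S"
  shows "(\<lambda>s. k s *\<^sub>R R s) integrable_on S"
    and "unwr (integral S (\<lambda>s. k s *\<^sub>R wr (R s))) = integral S (\<lambda>s. k s *\<^sub>R R s)"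
proof -
  have e: "unwr \<circ> (\<lambda>s. k s *\<^sub>R wr (R s)) = (\<lambda>s. k s *\<^sub>R R s)"
    by (auto simp: o_def unwr_scaleR wr_inverse)
  show "(\<lambda>s. k s *\<^sub>R R s) integrable_on S"
    using integrable_linear[OF assms bounded_linear_unwr] by (simp add: e)
  show "unwr (integral S (\<lambda>s. k s *\<^sub>R wr (R s))) = integral S (\<lambda>s. k s *\<^sub>R R s)"
    using integral_linear[OF assms bounded_linear_unwr] by (simp add: e)
qed

lemma sing_integrable_h:
  fixes R :: "real \<Rightarrow> 'a::{real_inner,complete_space}"
  assumes ac: "a \<le> c" and contR: "continuous_on {a..c} R"
    and bnd: "\<And>s. s \<in> {a..<c} \<Longrightarrow> norm (R s) \<le> C * (c - s) powr \<gamma>"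
    and pg: "p + \<gamma> > -1" and g0: "\<gamma> \<ge> 0" and C0: "C \<ge> 0"
  shows "(\<lambda>s. (c - s) powr p *\<^sub>R R s) integrable_on {a..c}"
proof -
  have "(\<lambda>s. (c - s) powr p *\<^sub>R wr (R s)) integrable_on {a..c}"
    by (rule sing_integrable[where C=C and \<gamma>=\<gamma>]) (use assms cont_wr[OF contR] in \<open>auto simp: norm_wr\<close>)
  then show ?thesis by (rule unwr_integrable)
qed

lemma J_integrable_h:
  fixes R :: "real \<Rightarrow> 'a::{real_inner,complete_space}"
  assumes c: "0 \<le> c" "c \<le> T" and contR: "continuous_on {0..T} R" and a: "0 < \<alpha>" "\<alpha> < 1"
  shows "(\<lambda>s. (c - s) powr (- \<alpha>) *\<^sub>R R s) integrable_on {0..c}"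
proof -
  obtain B where B: "B > 0" "\<And>s. s \<in> {0..T} \<Longrightarrow> norm (R s) \<le> B"
    using compact_imp_bounded[OF compact_continuous_image[OF contR compact_Icc]]
    unfolding bounded_pos by auto
  show ?thesis
  proof (rule sing_integrable_h[where C=B and \<gamma>=0])
    show "continuous_on {0..c} R" using c by (auto intro: continuous_on_subset[OF contR])
    show "norm (R s) \<le> B * (c - s) powr 0" if "s \<in> {0..<c}" for s
      using B(2)[of s] that c by auto
  qed (use c a B in auto)
qed

lemma J_integrable_r:
  fixes R :: "real \<Rightarrow> real"
  assumes c: "0 \<le> c" "c \<le> T" and contR: "continuous_on {0..T} R" and a: "0 < \<alpha>" "\<alpha> < 1"
  shows "(\<lambda>s. (c - s) powr (- \<alpha>) *\<^sub>R R s) integrable_on {0..c}"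
proof -
  obtain B where B: "B > 0" "\<And>s. s \<in> {0..T} \<Longrightarrow> norm (R s) \<le> B"
    using compact_imp_bounded[OF compact_continuous_image[OF contR compact_Icc]]
    unfolding bounded_pos by auto
  show ?thesis
  proof (rule sing_integrable[where C=B and \<gamma>=0])
    show "continuous_on {0..c} R" using c by (auto intro: continuous_on_subset[OF contR])
    show "norm (R s) \<le> B * (c - s) powr 0" if "s \<in> {0..<c}" for s
      using B(2)[of s] that c by auto
  qed (use c a B in auto)
qed

lemma key_deriv_h:
  fixes R :: "real \<Rightarrow> 'a::{real_inner,complete_space}"
  assumes tT: "0 < t" "t \<le> T" and a: "0 < \<alpha>" "\<alpha> < 1" and g: "\<alpha> < \<gamma>" "\<gamma> \<le> 1"
    and contR: "continuous_on {0..T} R" and Rt: "R t = 0"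
    and bnd: "\<And>s. s \<in> {0..T} \<Longrightarrow> norm (R s) \<le> C * \<bar>s - t\<bar> powr \<gamma>" and C0: "C \<ge> 0"
  shows "((\<lambda>\<tau>. integral {0..\<tau>} (\<lambda>s. (\<tau> - s) powr (-\<alpha>) *\<^sub>R R s)) has_vector_derivative
      (- \<alpha> *\<^sub>R integral {0..t} (\<lambda>s. (t - s) powr (-\<alpha>-1) *\<^sub>R R s))) (at t within {0..T})"
proof -
  define R' where "R' = (\<lambda>s. wr (R s))"
  have contR': "continuous_on {0..T} R'" unfolding R'_def by (rule cont_wr[OF contR])
  have R't: "R' t = 0" by (simp add: R'_def Rt wr_zero)
  have bnd': "\<And>s. s \<in> {0..T} \<Longrightarrow> norm (R' s) \<le> C * \<bar>s - t\<bar> powr \<gamma>"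
    using bnd by (simp add: R'_def norm_wr)
  have d: "((\<lambda>\<tau>. integral {0..\<tau>} (\<lambda>s. (\<tau> - s) powr (-\<alpha>) *\<^sub>R R' s)) has_vector_derivative
      (- \<alpha> *\<^sub>R integral {0..t} (\<lambda>s. (t - s) powr (-\<alpha>-1) *\<^sub>R R' s))) (at t within {0..T})"
    by (rule key_deriv[OF tT a g contR' R't bnd' C0])
  have IG: "(\<lambda>s. (t - s) powr (-\<alpha>-1) *\<^sub>R R' s) integrable_on {0..t}"
    by (rule key_integrable[OF tT a g(1) contR' bnd' C0])
  have d2: "((\<lambda>\<tau>. unwr (integral {0..\<tau>} (\<lambda>s. (\<tau> - s) powr (-\<alpha>) *\<^sub>R R' s))) has_vector_derivative
      unwr (- \<alpha> *\<^sub>R integral {0..t} (\<lambda>s. (t - s) powr (-\<alpha>-1) *\<^sub>R R' s))) (at t within {0..T})"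
    by (rule bounded_linear.has_vector_derivative[OF bounded_linear_unwr d])
  have e1: "unwr (- \<alpha> *\<^sub>R integral {0..t} (\<lambda>s. (t - s) powr (-\<alpha>-1) *\<^sub>R R' s))
      = - \<alpha> *\<^sub>R integral {0..t} (\<lambda>s. (t - s) powr (-\<alpha>-1) *\<^sub>R R s)"
    using unwr_integrable(2)[OF IG[unfolded R'_def]] by (simp add: unwr_scaleR unwr_minus R'_def)
  show ?thesis
  proof (rule has_vector_derivative_transform_within[OF d2[unfolded e1] zero_less_one])
    show "t \<in> {0..T}" using tT by auto
    fix x assume x: "x \<in> {0..T}" "dist x t < 1"
    have "(\<lambda>s. (x - s) powr (-\<alpha>) *\<^sub>R wr (R s)) integrable_on {0..x}"
    proof -
      obtain B where B: "B > 0" "\<And>s. s \<in> {0..T} \<Longrightarrow> norm (R' s) \<le> B"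
        using compact_imp_bounded[OF compact_continuous_image[OF contR' compact_Icc]]
        unfolding bounded_pos by auto
      show ?thesis
      proof (rule sing_integrable[where C=B and \<gamma>=0])
        show "continuous_on {0..x} (\<lambda>s. wr (R s))" using x contR' unfolding R'_def
          by (auto intro: continuous_on_subset)
        show "norm (wr (R s)) \<le> B * (x - s) powr 0" if "s \<in> {0..<x}" for s
          using B(2)[of s] that x by (auto simp: R'_def)
      qed (use x a B in auto)
    qed
    then show "unwr (integral {0..x} (\<lambda>s. (x - s) powr (-\<alpha>) *\<^sub>R R' s)) = integral {0..x} (\<lambda>s. (x - s) powr (-\<alpha>) *\<^sub>R R s)"
      unfolding R'_def by (rule unwr_integrable(2))
  qed
qed

lemma powr_reduce:
  fixes x T g g' :: real
  assumes "0 \<le> x" "x \<le> T" "g' \<le> g"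
  shows "x powr g \<le> T powr (g - g') * x powr g'"
proof (cases "x = 0")
  case True then show ?thesis by simp
next
  case False
  hence x: "x > 0" using assms by simp
  have "x powr g = x powr (g - g') * x powr g'" by (simp add: powr_add[symmetric])
  also have "\<dots> \<le> T powr (g - g') * x powr g'"
    using assms x by (intro mult_right_mono powr_mono2) auto
  finally show ?thesis .
qed

lemma kernel_deriv:
  fixes t \<alpha> :: real
  assumes t: "t > 0" and a: "\<alpha> < 1"
  shows "((\<lambda>\<tau>. \<tau> powr (1 - \<alpha>) / (1 - \<alpha>)) has_vector_derivative t powr (- \<alpha>)) (at t within S)"
proof -
  have "((\<lambda>z. z powr (1 - \<alpha>)) has_real_derivative (1 - \<alpha>) * t powr (1 - \<alpha> - 1)) (at t)"
    by (rule has_real_derivative_powr[OF t])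
  hence "((\<lambda>z. z powr (1 - \<alpha>) / (1 - \<alpha>)) has_real_derivative (1 - \<alpha>) * t powr (1 - \<alpha> - 1) / (1 - \<alpha>)) (at t)"
    by (rule DERIV_cdivide)
  moreover have "(1 - \<alpha>) * t powr (1 - \<alpha> - 1) / (1 - \<alpha>) = t powr (- \<alpha>)" using a by simp
  ultimately have "((\<lambda>z. z powr (1 - \<alpha>) / (1 - \<alpha>)) has_real_derivative t powr (- \<alpha>)) (at t within S)"
    by (simp add: has_field_derivative_at_within)
  then show ?thesis by (simp add: has_real_derivative_iff_has_vector_derivative)
qed

lemma kernel_integral:
  fixes c \<alpha> :: real
  assumes "0 \<le> c" "\<alpha> < 1"
  shows "((\<lambda>s. (c - s) powr (- \<alpha>)) has_integral c powr (1 - \<alpha>) / (1 - \<alpha>)) {0..c}"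
  using powr_kernel_has_integral[of 0 c "- \<alpha>"] assms by simp

lemma bounded_on:
  fixes f :: "real \<Rightarrow> 'b::real_normed_vector"
  assumes "continuous_on {0..T} f"
  obtains B where "B > 0" "\<And>s. s \<in> {0..T} \<Longrightarrow> norm (f s) \<le> B"
  using compact_imp_bounded[OF compact_continuous_image[OF assms compact_Icc]]
  unfolding bounded_pos by auto

lemma RL_J1_split_h:
  fixes f :: "real \<Rightarrow> 'a::{real_inner,complete_space}"
  assumes c: "0 \<le> c" "c \<le> T" and contf: "continuous_on {0..T} f" and a: "0 < \<alpha>" "\<alpha> < 1"
  shows "integral {0..c} (\<lambda>s. (c - s) powr (- \<alpha>) *\<^sub>R f s)
     = (c powr (1 - \<alpha>) / (1 - \<alpha>)) *\<^sub>R f t + integral {0..c} (\<lambda>s. (c - s) powr (- \<alpha>) *\<^sub>R (f s - f t))"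
proof -
  have I2: "(\<lambda>s. (c - s) powr (- \<alpha>) *\<^sub>R (f s - f t)) integrable_on {0..c}"
    by (rule J_integrable_h[OF c _ a]) (auto intro!: continuous_intros contf)
  have h1: "((\<lambda>s. (c - s) powr (- \<alpha>) *\<^sub>R f t) has_integral (c powr (1 - \<alpha>) / (1 - \<alpha>)) *\<^sub>R f t) {0..c}"
    by (rule has_integral_scaleR_left[OF kernel_integral[OF c(1) a(2)]])
  have "((\<lambda>s. (c - s) powr (- \<alpha>) *\<^sub>R f t + (c - s) powr (- \<alpha>) *\<^sub>R (f s - f t)) has_integral
      (c powr (1 - \<alpha>) / (1 - \<alpha>)) *\<^sub>R f t + integral {0..c} (\<lambda>s. (c - s) powr (- \<alpha>) *\<^sub>R (f s - f t))) {0..c}"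
    by (rule has_integral_add[OF h1 integrable_integral[OF I2]])
  moreover have "(\<lambda>s. (c - s) powr (- \<alpha>) *\<^sub>R f t + (c - s) powr (- \<alpha>) *\<^sub>R (f s - f t))
      = (\<lambda>s. (c - s) powr (- \<alpha>) *\<^sub>R f s)"
    by (auto simp: algebra_simps)
  ultimately show ?thesis by (simp add: integral_unique)
qed

lemma holder_D_exists:
  fixes f2 :: "real \<Rightarrow> 'a::{real_inner, complete_space}"
  assumes tT: "0 < t" "t \<le> T" and a: "0 < \<alpha>" "\<alpha> < 1" and b: "\<alpha> < \<beta>" "\<beta> < 1"
    and c2: "continuous_on {0..T} f2" and M2: "M2 > 0"
    and h: "\<forall>x\<in>{0..T}. \<forall>y\<in>{0..T}. norm (f2 x - f2 y) \<le> M2 * \<bar>x - y\<bar> powr \<beta>"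
  shows "RL_D_exists T \<alpha> f2 t"
proof -
  define R2 where "R2 = (\<lambda>s. f2 s - f2 t)"
  have cR2: "continuous_on {0..T} R2" unfolding R2_def by (auto intro!: continuous_intros c2)
  have tin: "t \<in> {0..T}" using tT by auto
  have kd: "((\<lambda>\<tau>. integral {0..\<tau>} (\<lambda>s. (\<tau> - s) powr (-\<alpha>) *\<^sub>R R2 s)) has_vector_derivative
      (- \<alpha> *\<^sub>R integral {0..t} (\<lambda>s. (t - s) powr (-\<alpha>-1) *\<^sub>R R2 s))) (at t within {0..T})"
    by (rule key_deriv_h[OF tT a b(1) less_imp_le[OF b(2)] cR2, where C=M2])
       (use h tin M2 in \<open>auto simp: R2_def\<close>)
  have kk: "((\<lambda>\<tau>. (\<tau> powr (1 - \<alpha>) / (1 - \<alpha>)) *\<^sub>R f2 t) has_vector_derivative (t powr (- \<alpha>)) *\<^sub>R f2 t) (at t within {0..T})"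
    by (rule bounded_linear.has_vector_derivative[OF bounded_linear_scaleR_left kernel_deriv[OF tT(1) a(2)]])
  have d: "((\<lambda>\<tau>. (1 / Gamma (1 - \<alpha>)) *\<^sub>R ((\<tau> powr (1 - \<alpha>) / (1 - \<alpha>)) *\<^sub>R f2 t
       + integral {0..\<tau>} (\<lambda>s. (\<tau> - s) powr (-\<alpha>) *\<^sub>R R2 s))) has_vector_derivative
      (1 / Gamma (1 - \<alpha>)) *\<^sub>R ((t powr (- \<alpha>)) *\<^sub>R f2 t + (- \<alpha> *\<^sub>R integral {0..t} (\<lambda>s. (t - s) powr (-\<alpha>-1) *\<^sub>R R2 s))))
      (at t within {0..T})"
    by (rule bounded_linear.has_vector_derivative[OF bounded_linear_scaleR_right has_vector_derivative_add[OF kk kd]])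
  have "((\<lambda>\<tau>. RL_J1 \<alpha> f2 \<tau>) has_vector_derivative
      (1 / Gamma (1 - \<alpha>)) *\<^sub>R ((t powr (- \<alpha>)) *\<^sub>R f2 t + (- \<alpha> *\<^sub>R integral {0..t} (\<lambda>s. (t - s) powr (-\<alpha>-1) *\<^sub>R R2 s))))
      (at t within {0..T})"
  proof (rule has_vector_derivative_transform_within[OF d zero_less_one tin])
    fix x assume x: "x \<in> {0..T}" "dist x t < 1"
    show "(1 / Gamma (1 - \<alpha>)) *\<^sub>R ((x powr (1 - \<alpha>) / (1 - \<alpha>)) *\<^sub>R f2 t
       + integral {0..x} (\<lambda>s. (x - s) powr (-\<alpha>) *\<^sub>R R2 s)) = RL_J1 \<alpha> f2 x"
      unfolding RL_J1_def R2_def using RL_J1_split_h[of x T f2 \<alpha> t] x c2 a by simp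
  qed
  then show ?thesis unfolding RL_D_exists_def by (rule differentiableI_vector)
qed

lemma common_facts:
  fixes f1 f2 :: "real \<Rightarrow> 'a::{real_inner, complete_space}"
    and T \<alpha> t :: real
  assumes "T > 0" and "0 < \<alpha>" and "\<alpha> < 1" and "t \<in> {0<..T}"
    and "(continuous_on {0..T} f1 \<and> RL_D_exists T \<alpha> f1 t \<and>
          (\<exists>\<beta>. \<alpha> < \<beta> \<and> \<beta> < 1 \<and> holder_space \<beta> T f2))
       \<or> (\<exists>\<beta> \<delta>. 0 < \<beta> \<and> \<beta> < 1 \<and> 0 < \<delta> \<and> \<delta> < 1 \<and> \<alpha> < \<beta> + \<delta> \<and>
          holder_space \<beta> T f1 \<and> holder_space \<delta> T f2 \<and>
          RL_D_exists T \<alpha> f1 t \<and> RL_D_exists T \<alpha> f2 t)"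
  shows "continuous_on {0..T} f1 \<and> continuous_on {0..T} f2 \<and> RL_D_exists T \<alpha> f1 t \<and> RL_D_exists T \<alpha> f2 t \<and>
     (\<exists>\<gamma> C. \<alpha> < \<gamma> \<and> \<gamma> \<le> 1 \<and> 0 \<le> C \<and>
        (\<forall>s\<in>{0..T}. \<bar>inner (f1 s - f1 t) (f2 s - f2 t)\<bar> \<le> C * \<bar>s - t\<bar> powr \<gamma>))"
  using assms(5)
proof
  have tT: "0 < t" "t \<le> T" using assms(4) by auto
  have a: "0 < \<alpha>" "\<alpha> < 1" using assms(2,3) by auto
  have tin: "t \<in> {0..T}" using tT by auto
  assume H: "continuous_on {0..T} f1 \<and> RL_D_exists T \<alpha> f1 t \<and> (\<exists>\<beta>. \<alpha> < \<beta> \<and> \<beta> < 1 \<and> holder_space \<beta> T f2)"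
  then obtain \<beta> where b: "\<alpha> < \<beta>" "\<beta> < 1" and h2: "holder_space \<beta> T f2"
    and c1: "continuous_on {0..T} f1" and e1: "RL_D_exists T \<alpha> f1 t" by auto
  from h2 obtain M2 where c2: "continuous_on {0..T} f2" and M2: "M2 > 0"
    and hh: "\<forall>x\<in>{0..T}. \<forall>y\<in>{0..T}. norm (f2 x - f2 y) \<le> M2 * \<bar>x - y\<bar> powr \<beta>"
    unfolding holder_space_def by auto
  obtain B1 where B1: "B1 > 0" "\<And>s. s \<in> {0..T} \<Longrightarrow> norm (f1 s) \<le> B1" using bounded_on[OF c1] by blast
  have e2: "RL_D_exists T \<alpha> f2 t" by (rule holder_D_exists[OF tT a b c2 M2 hh])
  have Rb: "\<forall>s\<in>{0..T}. \<bar>inner (f1 s - f1 t) (f2 s - f2 t)\<bar> \<le> (2 * B1 * M2) * \<bar>s - t\<bar> powr \<beta>"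
  proof
    fix s assume s: "s \<in> {0..T}"
    have n1: "norm (f1 s - f1 t) \<le> 2 * B1"
      using norm_triangle_ineq4[of "f1 s" "f1 t"] B1(2)[OF s] B1(2)[OF tin] by linarith
    have "\<bar>inner (f1 s - f1 t) (f2 s - f2 t)\<bar> \<le> norm (f1 s - f1 t) * norm (f2 s - f2 t)"
      by (rule Cauchy_Schwarz_ineq2)
    also have "\<dots> \<le> (2 * B1) * (M2 * \<bar>s - t\<bar> powr \<beta>)"
      using n1 hh s tin B1(1) by (intro mult_mono) auto
    finally show "\<bar>inner (f1 s - f1 t) (f2 s - f2 t)\<bar> \<le> (2 * B1 * M2) * \<bar>s - t\<bar> powr \<beta>" by (simp add: mult_ac)
  qed
  show ?thesis using c1 c2 e1 e2 Rb b B1 M2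
    by (intro conjI exI[of _ \<beta>] exI[of _ "2 * B1 * M2"]) auto
next
  have tT: "0 < t" "t \<le> T" using assms(4) by auto
  have tin: "t \<in> {0..T}" using tT by auto
  assume "\<exists>\<beta> \<delta>. 0 < \<beta> \<and> \<beta> < 1 \<and> 0 < \<delta> \<and> \<delta> < 1 \<and> \<alpha> < \<beta> + \<delta> \<and>
          holder_space \<beta> T f1 \<and> holder_space \<delta> T f2 \<and>
          RL_D_exists T \<alpha> f1 t \<and> RL_D_exists T \<alpha> f2 t"
  then obtain \<beta> \<delta> where bd: "0 < \<beta>" "0 < \<delta>" "\<alpha> < \<beta> + \<delta>"
    and h1: "holder_space \<beta> T f1" and h2: "holder_space \<delta> T f2"
    and e1: "RL_D_exists T \<alpha> f1 t" and e2: "RL_D_exists T \<alpha> f2 t" by auto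
  from h1 obtain M1 where c1: "continuous_on {0..T} f1" and M1: "M1 > 0"
    and hh1: "\<forall>x\<in>{0..T}. \<forall>y\<in>{0..T}. norm (f1 x - f1 y) \<le> M1 * \<bar>x - y\<bar> powr \<beta>"
    unfolding holder_space_def by auto
  from h2 obtain M2 where c2: "continuous_on {0..T} f2" and M2: "M2 > 0"
    and hh2: "\<forall>x\<in>{0..T}. \<forall>y\<in>{0..T}. norm (f2 x - f2 y) \<le> M2 * \<bar>x - y\<bar> powr \<delta>"
    unfolding holder_space_def by auto
  define \<gamma> where "\<gamma> = min (\<beta> + \<delta>) 1"
  have g: "\<alpha> < \<gamma>" "\<gamma> \<le> 1" "\<gamma> \<le> \<beta> + \<delta>" using bd assms(3) by (auto simp: \<gamma>_def)
  define C where "C = M1 * M2 * T powr (\<beta> + \<delta> - \<gamma>)"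
  have C0: "0 \<le> C" using M1 M2 by (simp add: C_def)
  have Rb: "\<forall>s\<in>{0..T}. \<bar>inner (f1 s - f1 t) (f2 s - f2 t)\<bar> \<le> C * \<bar>s - t\<bar> powr \<gamma>"
  proof
    fix s assume s: "s \<in> {0..T}"
    have "\<bar>inner (f1 s - f1 t) (f2 s - f2 t)\<bar> \<le> norm (f1 s - f1 t) * norm (f2 s - f2 t)"
      by (rule Cauchy_Schwarz_ineq2)
    also have "\<dots> \<le> (M1 * \<bar>s - t\<bar> powr \<beta>) * (M2 * \<bar>s - t\<bar> powr \<delta>)"
      using hh1 hh2 s tin M1 by (intro mult_mono) auto
    also have "\<dots> = M1 * M2 * \<bar>s - t\<bar> powr (\<beta> + \<delta>)" by (simp add: powr_add)
    also have "\<bar>s - t\<bar> powr (\<beta> + \<delta>) \<le> T powr (\<beta> + \<delta> - \<gamma>) * \<bar>s - t\<bar> powr \<gamma>"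
      using s tin g by (intro powr_reduce) auto
    hence "M1 * M2 * \<bar>s - t\<bar> powr (\<beta> + \<delta>) \<le> M1 * M2 * (T powr (\<beta> + \<delta> - \<gamma>) * \<bar>s - t\<bar> powr \<gamma>)"
      using M1 M2 by (intro mult_left_mono) auto
    finally show "\<bar>inner (f1 s - f1 t) (f2 s - f2 t)\<bar> \<le> C * \<bar>s - t\<bar> powr \<gamma>" by (simp add: C_def mult_ac)
  qed
  show ?thesis using c1 c2 e1 e2 Rb g C0
    by (intro conjI exI[of _ \<gamma>] exI[of _ C]) auto
qed

theorem theorem3p8:
  fixes f1 f2 :: "real \<Rightarrow> 'a::{real_inner, complete_space}"
    and T \<alpha> t :: real
  assumes "T > 0" and "0 < \<alpha>" and "\<alpha> < 1" and "t \<in> {0<..T}"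
    and "(continuous_on {0..T} f1 \<and> RL_D_exists T \<alpha> f1 t \<and>
          (\<exists>\<beta>. \<alpha> < \<beta> \<and> \<beta> < 1 \<and> holder_space \<beta> T f2))
       \<or> (\<exists>\<beta> \<delta>. 0 < \<beta> \<and> \<beta> < 1 \<and> 0 < \<delta> \<and> \<delta> < 1 \<and> \<alpha> < \<beta> + \<delta> \<and>
          holder_space \<beta> T f1 \<and> holder_space \<delta> T f2 \<and>
          RL_D_exists T \<alpha> f1 t \<and> RL_D_exists T \<alpha> f2 t)"
  shows "RL_D_exists T \<alpha> f2 t
    \<and> RL_D_exists T \<alpha> (\<lambda>s. inner (f1 s) (f2 s)) t
    \<and> (\<lambda>s. inner (f1 s - f1 t) (f2 s - f2 t) / (t - s) powr (\<alpha> + 1)) integrable_on {0..t}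
    \<and> RL_D T \<alpha> (\<lambda>s. inner (f1 s) (f2 s)) t =
        inner (RL_D T \<alpha> f1 t) (f2 t) + inner (f1 t) (RL_D T \<alpha> f2 t)
        - \<alpha> / Gamma (1 - \<alpha>) *
            integral {0..t} (\<lambda>s. inner (f1 s - f1 t) (f2 s - f2 t) / (t - s) powr (\<alpha> + 1))
        - inner (f1 t) (f2 t) / (Gamma (1 - \<alpha>) * t powr \<alpha>)"
proof -
  have tT: "0 < t" "t \<le> T" using assms(4) by auto
  have a: "0 < \<alpha>" "\<alpha> < 1" using assms(2,3) by auto
  have tin: "t \<in> {0..T}" using tT by auto
  note cf = common_facts[OF assms]
  have c1: "continuous_on {0..T} f1" using cf by (rule conjunct1)
  have c2: "continuous_on {0..T} f2" using cf by (elim conjE)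
  have e1: "RL_D_exists T \<alpha> f1 t" using cf by (elim conjE)
  have e2: "RL_D_exists T \<alpha> f2 t" using cf by (elim conjE)
  have ex: "\<exists>\<gamma> C. \<alpha> < \<gamma> \<and> \<gamma> \<le> 1 \<and> 0 \<le> C \<and>
        (\<forall>s\<in>{0..T}. \<bar>inner (f1 s - f1 t) (f2 s - f2 t)\<bar> \<le> C * \<bar>s - t\<bar> powr \<gamma>)"
    using cf by (elim conjE)
  then obtain \<gamma> C where g: "\<alpha> < \<gamma>" "\<gamma> \<le> 1" and C0: "0 \<le> C"
    and Rb: "\<forall>s\<in>{0..T}. \<bar>inner (f1 s - f1 t) (f2 s - f2 t)\<bar> \<le> C * \<bar>s - t\<bar> powr \<gamma>"
    by (elim exE conjE)
  define \<Gamma> where "\<Gamma> = Gamma (1 - \<alpha>)"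
  define P where "P = (\<lambda>s. inner (f1 s) (f2 s))"
  define R where "R = (\<lambda>s. inner (f1 s - f1 t) (f2 s - f2 t))"
  define c where "c = inner (f1 t) (f2 t)"
  define L where "L = integral {0..t} (\<lambda>s. (t - s) powr (-\<alpha>-1) *\<^sub>R R s)"
  define D1 where "D1 = RL_D T \<alpha> f1 t"
  define D2 where "D2 = RL_D T \<alpha> f2 t"
  have cR: "continuous_on {0..T} R" unfolding R_def by (auto intro!: continuous_intros c1 c2)
  have Rt: "R t = 0" by (simp add: R_def)
  have bndR: "\<And>s. s \<in> {0..T} \<Longrightarrow> norm (R s) \<le> C * \<bar>s - t\<bar> powr \<gamma>" using Rb by (simp add: R_def)
  have IG: "(\<lambda>s. (t - s) powr (-\<alpha>-1) *\<^sub>R R s) integrable_on {0..t}"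
    by (rule key_integrable[OF tT a g(1) cR bndR C0])
  have KD: "((\<lambda>\<tau>. integral {0..\<tau>} (\<lambda>s. (\<tau> - s) powr (-\<alpha>) *\<^sub>R R s)) has_vector_derivative (- \<alpha> *\<^sub>R L)) (at t within {0..T})"
    unfolding L_def by (rule key_deriv[OF tT a g cR Rt bndR C0])
  have H1: "((\<lambda>\<tau>. RL_J1 \<alpha> f1 \<tau>) has_vector_derivative D1) (at t within {0..T})"
    using e1 unfolding RL_D_exists_def D1_def RL_D_def by (simp add: vector_derivative_works)
  have H2: "((\<lambda>\<tau>. RL_J1 \<alpha> f2 \<tau>) has_vector_derivative D2) (at t within {0..T})"
    using e2 unfolding RL_D_exists_def D2_def RL_D_def by (simp add: vector_derivative_works)
  define F where "F = (\<lambda>\<tau>. inner (RL_J1 \<alpha> f1 \<tau>) (f2 t) + inner (f1 t) (RL_J1 \<alpha> f2 \<tau>)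
      - (c / \<Gamma>) * (\<tau> powr (1 - \<alpha>) / (1 - \<alpha>)) + (1 / \<Gamma>) * integral {0..\<tau>} (\<lambda>s. (\<tau> - s) powr (-\<alpha>) *\<^sub>R R s))"
  define F' where "F' = inner D1 (f2 t) + inner (f1 t) D2 - (c / \<Gamma>) * t powr (- \<alpha>) + (1 / \<Gamma>) * (- \<alpha> *\<^sub>R L)"
  have dF: "(F has_vector_derivative F') (at t within {0..T})"
    unfolding F_def F'_def
    by (intro has_vector_derivative_add has_vector_derivative_diff
        bounded_linear.has_vector_derivative[OF bounded_linear_inner_left H1]
        bounded_linear.has_vector_derivative[OF bounded_linear_inner_right H2]
        has_vector_derivative_mult_right kernel_deriv tT a KD)
  have FP: "F x = RL_J1 \<alpha> P x" if x: "x \<in> {0..T}" for x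
  proof -
    have x0: "0 \<le> x" "x \<le> T" using x by auto
    have I1: "(\<lambda>s. (x - s) powr (- \<alpha>) *\<^sub>R f1 s) integrable_on {0..x}" by (rule J_integrable_h[OF x0 c1 a])
    have I2: "(\<lambda>s. (x - s) powr (- \<alpha>) *\<^sub>R f2 s) integrable_on {0..x}" by (rule J_integrable_h[OF x0 c2 a])
    have I4: "(\<lambda>s. (x - s) powr (- \<alpha>) *\<^sub>R R s) integrable_on {0..x}" by (rule J_integrable_r[OF x0 cR a])
    have h1: "((\<lambda>s. inner ((x - s) powr (- \<alpha>) *\<^sub>R f1 s) (f2 t)) has_integral
        inner (integral {0..x} (\<lambda>s. (x - s) powr (- \<alpha>) *\<^sub>R f1 s)) (f2 t)) {0..x}"
      using has_integral_linear[OF integrable_integral[OF I1] bounded_linear_inner_left[of "f2 t"]]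
      by (simp add: o_def)
    have h2: "((\<lambda>s. inner (f1 t) ((x - s) powr (- \<alpha>) *\<^sub>R f2 s)) has_integral
        inner (f1 t) (integral {0..x} (\<lambda>s. (x - s) powr (- \<alpha>) *\<^sub>R f2 s))) {0..x}"
      using has_integral_linear[OF integrable_integral[OF I2] bounded_linear_inner_right[of "f1 t"]]
      by (simp add: o_def)
    have h3: "((\<lambda>s. c * (x - s) powr (- \<alpha>)) has_integral c * (x powr (1 - \<alpha>) / (1 - \<alpha>))) {0..x}"
      by (rule has_integral_mult_right[OF kernel_integral[OF x0(1) a(2)]])
    have h4: "((\<lambda>s. (x - s) powr (- \<alpha>) *\<^sub>R R s) has_integral integral {0..x} (\<lambda>s. (x - s) powr (- \<alpha>) *\<^sub>R R s)) {0..x}"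
      by (rule integrable_integral[OF I4])
    note hs = has_integral_add[OF has_integral_diff[OF has_integral_add[OF h1 h2] h3] h4]
    have pw: "(\<lambda>s. inner ((x - s) powr (- \<alpha>) *\<^sub>R f1 s) (f2 t) + inner (f1 t) ((x - s) powr (- \<alpha>) *\<^sub>R f2 s)
        - c * (x - s) powr (- \<alpha>) + (x - s) powr (- \<alpha>) *\<^sub>R R s) = (\<lambda>s. (x - s) powr (- \<alpha>) *\<^sub>R P s)"
      by (auto simp: P_def R_def c_def inner_diff_left inner_diff_right algebra_simps)
    have eq: "integral {0..x} (\<lambda>s. (x - s) powr (- \<alpha>) *\<^sub>R P s)
        = inner (integral {0..x} (\<lambda>s. (x - s) powr (- \<alpha>) *\<^sub>R f1 s)) (f2 t)
        + inner (f1 t) (integral {0..x} (\<lambda>s. (x - s) powr (- \<alpha>) *\<^sub>R f2 s))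
        - c * (x powr (1 - \<alpha>) / (1 - \<alpha>)) + integral {0..x} (\<lambda>s. (x - s) powr (- \<alpha>) *\<^sub>R R s)"
      using hs unfolding pw by (rule integral_unique)
    have G0: "\<Gamma> > 0" unfolding \<Gamma>_def using a by (intro Gamma_real_pos) auto
    have a1: "1 - \<alpha> \<noteq> 0" using a by simp
    show ?thesis
      unfolding F_def RL_J1_def eq \<Gamma>_def[symmetric]
      using G0 a1 by (simp add: inner_scaleR_left inner_scaleR_right field_simps)
  qed
  have G0: "\<Gamma> > 0" unfolding \<Gamma>_def using a by (intro Gamma_real_pos) auto
  have dP: "((\<lambda>\<tau>. RL_J1 \<alpha> P \<tau>) has_vector_derivative F') (at t within {0..T})"
    by (rule has_vector_derivative_transform_within[OF dF zero_less_one tin]) (use FP in auto)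
  have e3: "RL_D_exists T \<alpha> P t" unfolding RL_D_exists_def by (rule differentiableI_vector[OF dP])
  have "vector_derivative (\<lambda>\<tau>. RL_J1 \<alpha> P \<tau>) (at t within cbox 0 T) = F'"
    by (rule vector_derivative_within_cbox) (use dP assms(1) tin in \<open>auto simp: cbox_interval\<close>)
  hence vd: "RL_D T \<alpha> P t = F'" unfolding RL_D_def by (simp add: cbox_interval)
  have pe: "(t - s) powr (-\<alpha>-1) *\<^sub>R R s = R s / (t - s) powr (\<alpha> + 1)" if s: "s \<in> {0..t}" for s
  proof (cases "s = t")
    case True then show ?thesis by (simp add: Rt)
  next
    case False
    hence "t - s > 0" using s by auto
    have "(t - s) powr (-\<alpha>-1) = inverse ((t - s) powr (\<alpha> + 1))"
    proof -
      have e: "-\<alpha>-1 = - (\<alpha> + 1)" by simp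
      show ?thesis unfolding e by (rule powr_minus)
    qed
    then show ?thesis by (simp add: divide_inverse mult.commute)
  qed
  have Iok: "(\<lambda>s. R s / (t - s) powr (\<alpha> + 1)) integrable_on {0..t}"
  proof -
    have "(\<lambda>s. R s / (t - s) powr (\<alpha> + 1)) integrable_on {0..t} \<longleftrightarrow>
        (\<lambda>s. (t - s) powr (-\<alpha>-1) *\<^sub>R R s) integrable_on {0..t}"
      by (rule Henstock_Kurzweil_Integration.integrable_cong) (metis pe)
    with IG show ?thesis by simp
  qed
  have LI: "L = integral {0..t} (\<lambda>s. R s / (t - s) powr (\<alpha> + 1))"
    unfolding L_def by (rule integral_cong) (use pe in auto)
  have fin: "F' = inner D1 (f2 t) + inner (f1 t) D2 - \<alpha> / \<Gamma> * L - c / (\<Gamma> * t powr \<alpha>)"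
    unfolding F'_def using G0 tT by (simp add: powr_minus field_simps)
  show ?thesis
    using e2 e3 Iok vd fin LI unfolding P_def R_def c_def D1_def D2_def \<Gamma>_def by simp
qed

end
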